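(* Let $b$ be a prime, $m$ a positive integer, $N=b^m$, $(\gamma_j)_{j\ge1}$ a non-increasing sequence with $0<\gamma_j\le1$, and $0\le w_1\le w_2\le\cdots$ integers. Let $\mathbf{z}=(b^{w_1}z_1,\dots,b^{w_s}z_s)$ be constructed by the reduced CBC algorithm: $z_1=1$, and for $d=1,\dots,s-1$, given $z_1,\dots,z_d$, $z_{d+1}\in\mathcal{Z}_{N,w_{d+1}}$ is chosen to minimize $z\mapsto R^{d+1}_{N,\boldsymbol\gamma}(b^{w_1}z_1,\dots,b^{w_d}z_d,b^{w_{d+1}}z)$ over $z\in\mathcal{Z}_{N,w_{d+1}}$. Then the lattice point set $P_N(\mathbf{z})$ satisfies $$D^*_{N,\boldsymbol\gamma}(\mathbf{z})\le\sum_{\mathfrak{u}\subseteq[s]}\gamma_{\mathfrak{u}}\left(1-\left(1-\frac1N\right)^{|\mathfrak{u}|}\right)+\frac1{2N}\prod_{j=1}^s\left(\beta_j+\left(1+2b^{\min\{w_j,m\}}\right)\gamma_jS_N\right),$$ where $\beta_j=1+\gamma_j$.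
   Context: $[s]=\{1,\dots,s\}$; product weights $\gamma_{\mathfrak{u}}=\prod_{j\in\mathfrak{u}}\gamma_j$, $\gamma_\emptyset=1$. $\mathcal{Z}_{N,w}=\{z\in\{1,\dots,b^{m-w}-1\}:\gcd(z,b^m)=1\}$ if $w<m$, and $\{1\}$ if $w\ge m$. $S_N=\sum_{-N/2<h\le N/2,\,h\ne0}\frac{1}{|h|}$. For $\mathbf{y}\in\mathbb{Z}^d$, $R^d_{N,\boldsymbol\gamma}(\mathbf{y})=\frac1N\sum_{k=0}^{N-1}\prod_{j=1}^d\big(\beta_j+\gamma_j\sum_{-N/2<h\le N/2,h\ne0}\frac{e^{2\pi i hky_j/N}}{|h|}\big)-\prod_{j=1}^d\beta_j$. Lattice point set $P_N(\mathbf{z})=\{\{k\mathbf{z}/N\}:k=0,\dots,N-1\}$ (componentwise fractional parts). $\mathrm{discr}(\mathbf{x},P_N)=\frac1N\#\{\mathbf{p}\in P_N:\mathbf{p}\in[\mathbf{0},\mathbf{x})\}-\prod_j x_j$; $D^*_{N,\boldsymbol\gamma}(\mathbf{z})=\sup_{\mathbf{x}\in(0,1]^s}\max_{\emptyset\ne\mathfrak{u}\subseteq[s]}\gamma_{\mathfrak{u}}|\mathrm{discr}((\mathbf{x}_{\mathfrak{u}},\mathbf{1}),P_N(\mathbf{z}))|$, where $(\mathbf{x}_{\mathfrak{u}},\mathbf{1})$ has $j$-th coordinate $x_j$ for $j\in\mathfrak{u}$ and $1$ otherwise. *)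

theory Defs
  imports "HOL-Analysis.Analysis"
begin

definition freqs :: "nat \<Rightarrow> int set" where
  "freqs N = {h::int. - (real N / 2) < real_of_int h \<and> real_of_int h \<le> real N / 2 \<and> h \<noteq> 0}"

definition S_N :: "nat \<Rightarrow> real" where
  "S_N N = (\<Sum>h\<in>freqs N. 1 / real_of_int \<bar>h\<bar>)"

definition Zset :: "nat \<Rightarrow> nat \<Rightarrow> nat \<Rightarrow> nat set" where
  "Zset b m w = (if w < m then {z \<in> {1 .. b ^ (m - w) - 1}. gcd z (b ^ m) = 1} else {1})"

definition R_crit :: "nat \<Rightarrow> nat \<Rightarrow> (nat \<Rightarrow> real) \<Rightarrow> (nat \<Rightarrow> real) \<Rightarrow> (nat \<Rightarrow> int) \<Rightarrow> complex" where
  "R_crit d N \<beta> \<gamma> y =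
     (1 / of_nat N) * (\<Sum>k<N. \<Prod>j\<in>{1..d}.
        (complex_of_real (\<beta> j) + complex_of_real (\<gamma> j) *
          (\<Sum>h\<in>freqs N. exp (2 * pi * \<i> * of_int h * of_nat k * of_int (y j) / of_nat N)
                          / of_int \<bar>h\<bar>)))
     - (\<Prod>j\<in>{1..d}. complex_of_real (\<beta> j))"

text \<open>Local discrepancy of the lattice point set P_N(y) (points counted with
  multiplicity over k = 0..N-1) at the box anchored at (x_u, 1).\<close>
definition discr_u :: "nat \<Rightarrow> (nat \<Rightarrow> int) \<Rightarrow> nat set \<Rightarrow> (nat \<Rightarrow> real) \<Rightarrow> real" where
  "discr_u N y u x =
     real (card {k \<in> {0..<N}. \<forall>j\<in>u. frac (real k * real_of_int (y j) / real N) < x j}) / real N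
     - (\<Prod>j\<in>u. x j)"

definition weighted_star_discrepancy ::
  "nat \<Rightarrow> nat \<Rightarrow> (nat \<Rightarrow> real) \<Rightarrow> (nat \<Rightarrow> int) \<Rightarrow> real" where
  "weighted_star_discrepancy s N \<gamma> y =
     (SUP p \<in> {(x, u). (\<forall>j\<in>{1..s}. 0 < x j \<and> x j \<le> 1) \<and> u \<subseteq> {1..s} \<and> u \<noteq> {}}.
        (\<Prod>j\<in>snd p. \<gamma> j) * \<bar>discr_u N y (snd p) (fst p)\<bar>)"

end

theory Submission
  imports Defs
begin

definition ee :: "nat \<Rightarrow> int \<Rightarrow> complex" where
  "ee N x = exp (2 * pi * \<i> * of_int x / of_nat N)"

lemma ee_add: "ee N (x + y) = ee N x * ee N y"
  unfolding ee_def by (simp add: distrib_left add_divide_distrib exp_add)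

lemma ee_0[simp]: "ee N 0 = 1"
  unfolding ee_def by simp

lemma ee_mult_N: assumes "N > 0" shows "ee N (int N * c) = 1"
proof -
  have "2 * pi * \<i> * of_int (int N * c) / of_nat N = \<i> * (of_int c * (of_real pi * 2))"
    using assms by (simp add: field_simps)
  then show ?thesis unfolding ee_def by simp
qed

lemma ee_dvd: assumes "N > 0" "int N dvd x" shows "ee N x = 1"
  using assms ee_mult_N by (auto elim!: dvdE)

lemma ee_mod: assumes "N > 0" shows "ee N (x mod int N) = ee N x"
proof -
  have "x = x mod int N + int N * (x div int N)" by simp
  then have "ee N x = ee N (x mod int N) * ee N (int N * (x div int N))"
    by (metis ee_add)
  with ee_mult_N[OF assms] show ?thesis by simp
qed

lemma ee_cong: assumes "N > 0" "x mod int N = y mod int N" shows "ee N x = ee N y"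
  by (metis assms ee_mod)

lemma ee_pow: "ee N (int k * x) = ee N x ^ k"
proof (induction k)
  case 0 then show ?case by simp
next
  case (Suc k)
  have "int (Suc k) * x = x + int k * x" by (simp add: algebra_simps)
  then show ?case using Suc by (simp add: ee_add)
qed

lemma ee_eq_1_iff: assumes "N > 0" shows "ee N x = 1 \<longleftrightarrow> int N dvd x"
proof
  assume "ee N x = 1"
  then obtain n :: int where n: "Im (2 * pi * \<i> * of_int x / of_nat N) = of_int (2 * n) * pi"
    unfolding ee_def exp_eq_1 by auto
  then have "2 * pi * real_of_int x / real N = 2 * real_of_int n * pi"
    by simp
  then have "real_of_int x = real N * real_of_int n"
    using assms pi_gt_zero by (simp add: field_simps)
  then have "x = int N * n" by (metis of_int_eq_iff of_int_mult of_int_of_nat_eq)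
  then show "int N dvd x" by simp
qed (use assms ee_dvd in auto)

lemma orth_k: assumes "N > 0"
  shows "(\<Sum>k<N. ee N (int k * t)) = (if int N dvd t then of_nat N else 0)"
proof (cases "int N dvd t")
  case True
  have "ee N (int k * t) = 1" for k using True assms by (intro ee_dvd) auto
  then show ?thesis using True by simp
next
  case False
  let ?q = "ee N t"
  have q1: "?q \<noteq> 1" using False ee_eq_1_iff[OF assms] by simp
  have qN: "?q ^ N = 1" using ee_pow[of N N t] ee_dvd[OF assms, of "int N * t"] by simp
  have "(\<Sum>k<N. ee N (int k * t)) = (\<Sum>k<N. ?q ^ k)" by (simp add: ee_pow)
  also have "\<dots> = (?q ^ N - 1) / (?q - 1)" using q1 by (rule geometric_sum)
  also have "\<dots> = 0" using qN by simp
  finally show ?thesis using False by simp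
qed

definition FF :: "nat \<Rightarrow> int set" where "FF N = insert 0 (freqs N)"

lemma freqs_sub: "freqs N \<subseteq> {- int N .. int N}"
  unfolding freqs_def by auto

lemma finite_freqs[simp]: "finite (freqs N)"
  using freqs_sub finite_subset by blast

lemma finite_FF[simp]: "finite (FF N)" unfolding FF_def by simp

lemma zero_notin_freqs[simp]: "0 \<notin> freqs N" unfolding freqs_def by simp

fun AA :: "nat \<Rightarrow> (nat \<Rightarrow> int \<Rightarrow> 'a::comm_ring_1) \<Rightarrow> (nat \<Rightarrow> int) \<Rightarrow> nat \<Rightarrow> int \<Rightarrow> 'a" where
  "AA N \<phi> y 0 t = (if int N dvd t then 1 else 0)"
| "AA N \<phi> y (Suc d) t = (\<Sum>h\<in>FF N. \<phi> (Suc d) h * AA N \<phi> y d (t + h * y (Suc d)))"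

lemma fourier:
  assumes "N > 0"
  shows "(1 / of_nat N) * (\<Sum>k<N. (\<Prod>j\<in>{1..d}. \<Sum>h\<in>FF N. \<phi> j h * ee N (int k * h * y j)) * ee N (int k * t))
         = AA N \<phi> y d t"
proof (induction d arbitrary: t)
  case 0
  show ?case using orth_k[OF assms, of t] assms by simp
next
  case (Suc d)
  have split: "{1..Suc d} = insert (Suc d) {1..d}" by auto
  have "(\<Sum>k<N. (\<Prod>j\<in>{1..Suc d}. \<Sum>h\<in>FF N. \<phi> j h * ee N (int k * h * y j)) * ee N (int k * t))
    = (\<Sum>k<N. \<Sum>h\<in>FF N. \<phi> (Suc d) h * ((\<Prod>j\<in>{1..d}. \<Sum>h\<in>FF N. \<phi> j h * ee N (int k * h * y j)) * ee N (int k * (t + h * y (Suc d)))))"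
    unfolding split
    by (intro sum.cong refl) (simp add: sum_distrib_left sum_distrib_right ee_add distrib_left mult_ac)
  also have "\<dots> = (\<Sum>h\<in>FF N. \<phi> (Suc d) h * (\<Sum>k<N. (\<Prod>j\<in>{1..d}. \<Sum>h\<in>FF N. \<phi> j h * ee N (int k * h * y j)) * ee N (int k * (t + h * y (Suc d)))))"
    by (subst sum.swap) (simp add: sum_distrib_left)
  finally show ?case
    by (simp add: sum_distrib_left Suc.IH[symmetric] mult_ac)
qed


lemma AA_of_real: "AA N (\<lambda>j h. of_real (\<rho> j h)) y d t = (of_real (AA N \<rho> y d t) :: complex)"
  by (induction d arbitrary: t) auto

lemma AA_nonneg: assumes "\<And>j h. \<rho> j h \<ge> (0::real)" shows "AA N \<rho> y d t \<ge> 0"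
  by (induction d arbitrary: t) (auto intro!: sum_nonneg mult_nonneg_nonneg assms)

lemma AA_mod: assumes "N > 0" shows "AA N \<phi> y d (t mod int N) = AA N \<phi> y d t"
proof (induction d arbitrary: t)
  case 0 then show ?case by (simp add: dvd_eq_mod_eq_0)
next
  case (Suc d)
  have "AA N \<phi> y d (t mod int N + h * y (Suc d)) = AA N \<phi> y d (t + h * y (Suc d))" for h
    by (metis Suc mod_add_left_eq)
  then show ?case by simp
qed

lemma AA_cong_y: "(\<And>j. j \<in> {1..d} \<Longrightarrow> y j = y' j) \<Longrightarrow> (\<And>j h. j \<in> {1..d} \<Longrightarrow> \<phi> j h = \<phi>' j h)
   \<Longrightarrow> AA N \<phi> y d t = AA N \<phi>' y' d t"
proof (induction d arbitrary: t)
  case 0 then show ?case by simp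
next
  case (Suc d)
  have "AA N \<phi> y d s = AA N \<phi>' y' d s" for s using Suc.prems by (intro Suc.IH) auto
  then show ?case using Suc.prems(1,2)[of "Suc d"] by simp
qed

lemma shift_sum:
  fixes f :: "int \<Rightarrow> 'a::comm_monoid_add"
  assumes "N > 0" "\<And>t. f (t mod int N) = f t"
  shows "(\<Sum>t<N. f (int t + c)) = (\<Sum>t<N. f (int t))"
proof -
  let ?g = "\<lambda>t. nat ((int t + c) mod int N)"
  have inj: "inj_on ?g {..<N}"
  proof
    fix a b assume ab: "a \<in> {..<N}" "b \<in> {..<N}" "?g a = ?g b"
    then have "(int a + c) mod int N = (int b + c) mod int N" using assms(1)
      by (metis nat_eq_iff2 pos_mod_sign of_nat_0_less_iff)
    then have "int a mod int N = int b mod int N" by (metis add_diff_cancel_right' mod_diff_left_eq)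
    then show "a = b" using ab by simp
  qed
  have sub: "?g ` {..<N} \<subseteq> {..<N}" using assms(1)
    by (auto simp: nat_less_iff)
  have im: "?g ` {..<N} = {..<N}" by (rule endo_inj_surj[OF _ sub inj]) simp
  have "(\<Sum>t<N. f (int t + c)) = (\<Sum>t<N. f (int (?g t)))"
    using assms by (intro sum.cong refl) (metis nat_0_le of_nat_0_less_iff pos_mod_sign)
  also have "\<dots> = (\<Sum>t\<in>?g ` {..<N}. f (int t))" by (simp add: sum.reindex[OF inj])
  finally show ?thesis using im by simp
qed

lemma AA_sum: assumes "N > 0"
  shows "(\<Sum>t<N. AA N \<phi> y d (int t)) = (\<Prod>j\<in>{1..d}. \<Sum>h\<in>FF N. \<phi> j h)"
proof (induction d)
  case 0
  have "(\<Sum>t<N. (if int N dvd int t then 1 else 0 :: 'a)) = (\<Sum>t<N. if t = 0 then 1 else 0)"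
    by (intro sum.cong refl) (auto dest: dvd_imp_le)
  then show ?case using assms by simp
next
  case (Suc d)
  have split: "{1..Suc d} = insert (Suc d) {1..d}" by auto
  have "(\<Sum>t<N. AA N \<phi> y (Suc d) (int t)) = (\<Sum>h\<in>FF N. \<phi> (Suc d) h * (\<Sum>t<N. AA N \<phi> y d (int t + h * y (Suc d))))"
    by (simp add: sum_distrib_left) (rule sum.swap)
  also have "\<dots> = (\<Sum>h\<in>FF N. \<phi> (Suc d) h * (\<Sum>t<N. AA N \<phi> y d (int t)))"
    by (intro sum.cong refl arg_cong2[where f="(*)"] shift_sum assms AA_mod)
  finally show ?case using Suc by (simp add: split sum_distrib_right[symmetric] mult.commute)
qed


definition rho :: "(nat \<Rightarrow> real) \<Rightarrow> (nat \<Rightarrow> real) \<Rightarrow> nat \<Rightarrow> int \<Rightarrow> real" where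
  "rho \<beta> \<gamma> j h = (if h = 0 then \<beta> j else \<gamma> j / real_of_int \<bar>h\<bar>)"

lemma ofr_abs: "complex_of_real \<bar>real_of_int x\<bar> = complex_of_int \<bar>x\<bar>"
  by (metis of_int_abs of_real_of_int_eq)

lemma freqs_nz: "x \<in> freqs N \<Longrightarrow> x \<noteq> 0" by auto

lemma inner_rho:
  "complex_of_real (\<beta> j) + complex_of_real (\<gamma> j) *
     (\<Sum>h\<in>freqs N. exp (2 * pi * \<i> * of_int h * of_nat k * of_int (y j) / of_nat N) / of_int \<bar>h\<bar>)
   = (\<Sum>h\<in>FF N. of_real (rho \<beta> \<gamma> j h) * ee N (int k * h * y j))"
proof -
  have "(\<Sum>h\<in>FF N. of_real (rho \<beta> \<gamma> j h) * ee N (int k * h * y j))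
      = of_real (\<beta> j) + (\<Sum>h\<in>freqs N. of_real (rho \<beta> \<gamma> j h) * ee N (int k * h * y j))"
    unfolding FF_def by (simp add: rho_def)
  also have "(\<Sum>h\<in>freqs N. of_real (rho \<beta> \<gamma> j h) * ee N (int k * h * y j))
     = complex_of_real (\<gamma> j) *
     (\<Sum>h\<in>freqs N. exp (2 * pi * \<i> * of_int h * of_nat k * of_int (y j) / of_nat N) / of_int \<bar>h\<bar>)"
    unfolding sum_distrib_left
    by (intro sum.cong refl) (auto simp: rho_def ee_def mult_ac ofr_abs dest: freqs_nz)
  finally show ?thesis by simp
qed

lemma R_crit_AA: assumes "N > 0"
  shows "R_crit d N \<beta> \<gamma> y = complex_of_real (AA N (rho \<beta> \<gamma>) y d 0 - (\<Prod>j\<in>{1..d}. \<beta> j))"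
proof -
  have "R_crit d N \<beta> \<gamma> y = (1 / of_nat N) * (\<Sum>k<N. (\<Prod>j\<in>{1..d}. \<Sum>h\<in>FF N. of_real (rho \<beta> \<gamma> j h) * ee N (int k * h * y j)) * ee N (int k * 0))
     - (\<Prod>j\<in>{1..d}. complex_of_real (\<beta> j))"
    unfolding R_crit_def inner_rho by simp
  also have "\<dots> = AA N (\<lambda>j h. of_real (rho \<beta> \<gamma> j h)) y d 0 - (\<Prod>j\<in>{1..d}. complex_of_real (\<beta> j))"
    by (subst fourier[OF assms]) simp
  finally show ?thesis by (simp add: AA_of_real)
qed

lemma Re_R_crit: assumes "N > 0"
  shows "Re (R_crit d N \<beta> \<gamma> y) = AA N (rho \<beta> \<gamma>) y d 0 - (\<Prod>j\<in>{1..d}. \<beta> j)"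
  by (simp only: R_crit_AA[OF assms] Re_complex_of_real)


lemma card_residue:
  fixes A :: "nat set"
  assumes "A \<subseteq> {..<M}" "L > 0" "L dvd M" "\<And>a c. a \<in> A \<Longrightarrow> c \<in> A \<Longrightarrow> int L dvd int a - int c"
  shows "card A \<le> M div L"
proof -
  have inj: "inj_on (\<lambda>a. a div L) A"
  proof
    fix a c assume ac: "a \<in> A" "c \<in> A" "a div L = c div L"
    have "int a mod int L = int c mod int L" using assms(4)[OF ac(1,2)] by (simp add: mod_eq_dvd_iff)
    then have "a mod L = c mod L" by (metis of_nat_eq_iff of_nat_mod)
    then show "a = c" using ac(3) by (metis div_mult_mod_eq)
  qed
  have "(\<lambda>a. a div L) ` A \<subseteq> {..<M div L}"
  proof
    fix x assume "x \<in> (\<lambda>a. a div L) ` A"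
    then obtain a where a: "a \<in> A" "x = a div L" by auto
    have "a < M" using a assms(1) by auto
    then have "a div L < M div L" using assms(2,3)
      by (metis dvd_div_mult_self less_mult_imp_div_less)
    then show "x \<in> {..<M div L}" using a by simp
  qed
  then have "card ((\<lambda>a. a div L) ` A) \<le> M div L"
    by (metis card_lessThan card_mono finite_lessThan)
  then show ?thesis using card_image[OF inj] by simp
qed

lemma divisor_sum:
  fixes G :: int
  assumes "G > 0"
  shows "(\<Sum>g\<in>{g\<in>freqs N. G dvd g}. real_of_int G / real_of_int \<bar>g\<bar>) \<le> S_N N"
proof -
  let ?A = "{g\<in>freqs N. G dvd g}"
  let ?f = "\<lambda>g. g div G"
  have inj: "inj_on ?f ?A"
    by (rule inj_onI) (use assms in \<open>auto elim!: dvdE\<close>)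
  have sub: "?f ` ?A \<subseteq> freqs N"
  proof
    fix x assume "x \<in> ?f ` ?A"
    then obtain g where g: "g \<in> freqs N" "G dvd g" "x = g div G" by auto
    then obtain q where q: "g = G * q" by (auto elim!: dvdE)
    have x: "x = q" using g q assms by simp
    have "q \<noteq> 0" using g q by auto
    have "real_of_int g = real_of_int G * real_of_int q" using q by simp
    moreover have "real_of_int G \<ge> 1" using assms by simp
    moreover have "- (real N / 2) < real_of_int g" "real_of_int g \<le> real N / 2"
      using g unfolding freqs_def by auto
    ultimately have "- (real N / 2) < real_of_int q \<and> real_of_int q \<le> real N / 2"
    proof (cases "q > 0")
      case True
      then have "real_of_int q \<le> real_of_int G * real_of_int q"
        using \<open>real_of_int G \<ge> 1\<close> by (simp add: mult_le_cancel_right1)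
      then show ?thesis using True \<open>real_of_int g = _\<close> \<open>real_of_int g \<le> _\<close> by (smt (verit) of_int_pos of_nat_0_le_iff)
    next
      case False
      then have "real_of_int q \<le> 0" by simp
      then have "real_of_int G * real_of_int q \<le> real_of_int q"
        using \<open>real_of_int G \<ge> 1\<close> by (simp add: mult_le_cancel_right2)
      moreover have "real N \<ge> 0" by simp
      ultimately show ?thesis using \<open>real_of_int q \<le> 0\<close> \<open>real_of_int g = _\<close> \<open>- (real N / 2) < real_of_int g\<close>
        by linarith
    qed
    then show "x \<in> freqs N" using x \<open>q \<noteq> 0\<close> unfolding freqs_def by auto
  qed
  have "(\<Sum>g\<in>?A. real_of_int G / real_of_int \<bar>g\<bar>) = (\<Sum>g\<in>?A. 1 / real_of_int \<bar>?f g\<bar>)"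
  proof (intro sum.cong refl)
    fix g assume "g \<in> ?A"
    then obtain q where q: "g = G * q" by (auto elim!: dvdE)
    then show "real_of_int G / real_of_int \<bar>g\<bar> = 1 / real_of_int \<bar>g div G\<bar>"
      using assms by (simp add: abs_mult)
  qed
  also have "\<dots> = (\<Sum>x\<in>?f ` ?A. 1 / real_of_int \<bar>x\<bar>)"
    by (simp add: sum.reindex[OF inj])
  also have "\<dots> \<le> S_N N" unfolding S_N_def
    by (rule sum_mono2[OF finite_freqs sub]) simp
  finally show ?thesis .
qed


lemma dvd_cancel_gcd:
  fixes M g x :: int
  assumes "M dvd g * x" "M > 0"
  shows "(M div gcd g M) dvd x"
proof -
  let ?G = "gcd g M"
  have G0: "?G > 0" using assms by simp
  obtain g' where g': "g = ?G * g'" by (meson gcd_dvd1 dvdE)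
  obtain L where L: "M = ?G * L" by (meson gcd_dvd2 dvdE)
  have "(?G * L) div ?G = L" using G0 by simp
  then have Ldiv: "M div ?G = L" using L by simp
  have cop: "coprime g' L"
  proof -
    have "gcd g M = ?G * gcd g' L" using g' L by (metis gcd_mult_distrib_int abs_of_pos G0)
    then have "gcd g' L = 1" using G0 assms(2) by auto
    then show ?thesis by (simp add: coprime_iff_gcd_eq_1)
  qed
  have gx: "g * x = ?G * (g' * x)" using g' by simp
  have "?G * L dvd ?G * (g' * x)" using assms(1) unfolding gx using L by simp
  then have "L dvd g' * x" using G0 assms(2) by auto
  then have "L dvd x" using cop by (metis coprime_commute coprime_dvd_mult_left_iff coprime_dvd_mult_right_iff)
  then show ?thesis using Ldiv by simp
qed

lemma count_sol:
  fixes g t :: int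
  assumes "prime b" "w < m"
  defines "A \<equiv> {z \<in> Zset b m w. int (b^m) dvd g * int (b^w) * int z - t}"
  shows "card A \<le> nat (gcd g (int (b^(m-w))))"
    and "A \<noteq> {} \<Longrightarrow> gcd t (int (b^m)) = int (b^w) * gcd g (int (b^(m-w)))"
proof -
  let ?M = "b^(m-w)" and ?B = "b^w"
  have b0: "b > 0" using assms(1) prime_gt_0_nat by blast
  have NBM: "b^m = ?B * ?M" using assms(2) by (simp add: power_add[symmetric])
  have M0: "?M > 0" "?B > 0" using b0 by simp_all
  have Z: "Zset b m w = {z \<in> {1 .. ?M - 1}. gcd z (b ^ m) = 1}" using assms(2) by (simp add: Zset_def)
  have cop: "coprime (int z) (int (b^m))" if "z \<in> A" for z
  proof -
    have "gcd z (b^m) = 1" using that unfolding A_def Z by simp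
    then have "coprime z (b^m)" by (simp add: coprime_iff_gcd_eq_1)
    then show ?thesis by (simp only: coprime_int_iff)
  qed
  have dv: "int (b^m) dvd g * int ?B * int z - t" if "z \<in> A" for z using that unfolding A_def by simp
  show "A \<noteq> {} \<Longrightarrow> gcd t (int (b^m)) = int (b^w) * gcd g (int (b^(m-w)))"
  proof -
    assume "A \<noteq> {}"
    then obtain z where z: "z \<in> A" by auto
    obtain q where q: "g * int ?B * int z - t = int (b^m) * q" using dv[OF z] by (auto elim!: dvdE)
    have "t = g * int ?B * int z + q * (- int (b^m))" using q by (simp add: algebra_simps)
    then have "gcd t (int (b^m)) = gcd (g * int ?B * int z) (int (b^m))"
      by (smt (verit) gcd.commute gcd_add_mult gcd_neg1_int)
    also have "\<dots> = gcd (g * int ?B) (int (b^m))"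
      using cop[OF z] by (simp add: gcd_mult_left_right_cancel coprime_commute)
    also have "\<dots> = gcd (int ?B * g) (int ?B * int ?M)" by (simp add: NBM mult.commute)
    also have "\<dots> = int ?B * gcd g (int ?M)" by (simp add: gcd_mult_distrib_int[symmetric])
    finally show ?thesis .
  qed
  let ?G = "nat (gcd g (int ?M))"
  have G0: "?G > 0" using M0 b0 by simp
  have GdM: "?G dvd ?M" by (simp add: nat_dvd_iff)
  let ?L = "?M div ?G"
  have L0: "?L > 0" using G0 dvd_imp_le[OF GdM M0(1)] by (simp add: div_greater_zero_iff)
  have MLG: "?M = ?L * ?G" using GdM by simp
  then have LdM: "?L dvd ?M" by (metis dvd_triv_left)
  have MdL: "?M div ?L = ?G" using L0 MLG by (metis nonzero_mult_div_cancel_left less_irrefl)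
  have "card A \<le> ?M div ?L"
  proof (rule card_residue)
    show "A \<subseteq> {..<?M}" unfolding A_def Z by auto
    show "?L > 0" by (rule L0)
    show "?L dvd ?M" by (rule LdM)
    fix a c assume ac: "a \<in> A" "c \<in> A"
    have "int (b^m) dvd (g * int ?B * int a - t) - (g * int ?B * int c - t)"
      using dv[OF ac(1)] dv[OF ac(2)] by (rule dvd_diff)
    then have "int ?B * int ?M dvd int ?B * (g * (int a - int c))"
      by (simp add: NBM algebra_simps)
    then have "int ?M dvd g * (int a - int c)" using M0 b0 by simp
    then have "(int ?M div gcd g (int ?M)) dvd (int a - int c)"
      using M0 by (intro dvd_cancel_gcd) auto
    moreover have "int ?L = int ?M div gcd g (int ?M)"
      by (simp add: zdiv_int)
    ultimately show "int ?L dvd int a - int c" by simp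
  qed
  then show "card A \<le> ?G" using MdL by simp
qed


lemma S_N_nonneg: "S_N N \<ge> 0"
  unfolding S_N_def by (intro sum_nonneg) simp

lemma K_bound:
  fixes t :: int
  assumes "prime b"
  shows "(\<Sum>z\<in>Zset b m w. \<Sum>g\<in>freqs (b^m).
            (if int (b^m) dvd g * int (b^w) * int z - t then 1 / real_of_int \<bar>g\<bar> else 0)) \<le> S_N (b^m)"
proof (cases "w < m")
  case False
  then have Z: "Zset b m w = {1}" by (simp add: Zset_def)
  have "(\<Sum>g\<in>freqs (b^m). (if int (b^m) dvd g * int (b^w) * 1 - t then 1 / real_of_int \<bar>g\<bar> else 0))
        \<le> (\<Sum>g\<in>freqs (b^m). 1 / real_of_int \<bar>g\<bar>)"
    by (intro sum_mono) auto
  then show ?thesis using Z by (simp add: S_N_def)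
next
  case True
  let ?N = "b^m" and ?M = "b^(m-w)"
  define G where "G = gcd t (int ?N) div int (b^w)"
  define A where "A g = {z \<in> Zset b m w. int ?N dvd g * int (b^w) * int z - t}" for g
  have fin: "finite (Zset b m w)" by (simp add: Zset_def)
  have G0: "G \<ge> 0" unfolding G_def by (simp add: div_int_pos_iff)
  have "(\<Sum>z\<in>Zset b m w. \<Sum>g\<in>freqs ?N.
            (if int ?N dvd g * int (b^w) * int z - t then 1 / real_of_int \<bar>g\<bar> else 0))
      = (\<Sum>g\<in>freqs ?N. \<Sum>z\<in>Zset b m w.
            (if int ?N dvd g * int (b^w) * int z - t then 1 / real_of_int \<bar>g\<bar> else 0))"
    by (rule sum.swap)
  also have "\<dots> = (\<Sum>g\<in>freqs ?N. real (card (A g)) / real_of_int \<bar>g\<bar>)"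
  proof (intro sum.cong refl)
    fix g
    have "(\<Sum>z\<in>Zset b m w. (if int ?N dvd g * int (b^w) * int z - t then 1 / real_of_int \<bar>g\<bar> else 0))
        = (\<Sum>z\<in>A g. 1 / real_of_int \<bar>g\<bar>)"
      unfolding A_def by (rule sum.inter_filter[OF fin, symmetric])
    then show "(\<Sum>z\<in>Zset b m w. (if int ?N dvd g * int (b^w) * int z - t then 1 / real_of_int \<bar>g\<bar> else 0))
        = real (card (A g)) / real_of_int \<bar>g\<bar>" by simp
  qed
  also have "\<dots> \<le> (\<Sum>g\<in>freqs ?N. (if G dvd g then real_of_int G / real_of_int \<bar>g\<bar> else 0))"
  proof (intro sum_mono)
    fix g assume g: "g \<in> freqs ?N"
    show "real (card (A g)) / real_of_int \<bar>g\<bar> \<le> (if G dvd g then real_of_int G / real_of_int \<bar>g\<bar> else 0)"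
    proof (cases "A g = {}")
      case True
      then show ?thesis using G0 by simp
    next
      case False
      have e: "gcd t (int ?N) = int (b^w) * gcd g (int ?M)"
        using count_sol(2)[OF assms True, of g t] False unfolding A_def by simp
      have bw: "int (b^w) > 0" using assms prime_gt_0_nat by simp
      have GG: "G = gcd g (int ?M)" unfolding G_def e using bw by simp
      have c: "card (A g) \<le> nat (gcd g (int ?M))"
        using count_sol(1)[OF assms True, of g t] unfolding A_def by simp
      have "real (card (A g)) \<le> real_of_int G" using c GG G0 by linarith
      moreover have "G dvd g" using GG by simp
      ultimately show ?thesis by (simp add: divide_right_mono)
    qed
  qed
  also have "\<dots> = (\<Sum>g\<in>{g\<in>freqs ?N. G dvd g}. real_of_int G / real_of_int \<bar>g\<bar>)"
    by (rule sum.inter_filter[OF finite_freqs, symmetric])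
  also have "\<dots> \<le> S_N ?N"
  proof (cases "G = 0")
    case True
    then have e: "{g\<in>freqs ?N. G dvd g} = {}" by auto
    show ?thesis using S_N_nonneg[of ?N] by (subst e) simp
  next
    case False
    then show ?thesis using G0 by (intro divisor_sum) simp
  qed
  finally show ?thesis .
qed

lemma card_Z:
  assumes "prime b" "w < m"
  shows "real (card (Zset b m w)) \<ge> real (b^(m-w)) / 2"
proof -
  let ?M = "b^(m-w)"
  have b2: "b \<ge> 2" using assms(1) prime_ge_2_nat by blast
  have Z: "Zset b m w = {z \<in> {1 .. ?M - 1}. gcd z (b ^ m) = 1}" using assms(2) by (simp add: Zset_def)
  let ?Z' = "{z \<in> {1 .. ?M - 1}. \<not> b dvd z}"
  let ?C = "{z \<in> {1 .. ?M - 1}. b dvd z}"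
  have sub: "?Z' \<subseteq> Zset b m w"
  proof
    fix z assume z: "z \<in> ?Z'"
    then have "coprime b z" using assms(1) by (simp add: prime_imp_coprime)
    then have "coprime z (b^m)" by (simp add: coprime_commute)
    then show "z \<in> Zset b m w" using z Z by (simp add: coprime_iff_gcd_eq_1)
  qed
  have un: "?Z' \<union> ?C = {1 .. ?M - 1}" by auto
  have dis: "?Z' \<inter> ?C = {}" by auto
  have "card ?Z' + card ?C = ?M - 1"
    using card_Un_disjoint[of ?Z' ?C] un dis by simp
  moreover have "card ?C \<le> ?M div b - 1"
  proof -
    have "?C \<subseteq> (\<lambda>k. b * k) ` {1..<?M div b}"
    proof
      fix z assume z: "z \<in> ?C"
      then obtain k where k: "z = b * k" by (auto elim!: dvdE)
      have k1: "k \<ge> 1" using z k by (cases k) auto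
      have Mpos: "?M \<ge> 1" using b2 by simp
      have "z \<le> ?M - 1" using z by simp
      then have bk: "b * k < ?M" using k Mpos by linarith
      have MM: "?M = b * b^(m-w-1)" using assms(2) by (metis Suc_diff_Suc diff_Suc_1 power_Suc zero_less_diff)
      have "k < ?M div b" using b2 bk MM
        by (metis mult_less_cancel1 nonzero_mult_div_cancel_left not_numeral_le_zero zero_less_iff_neq_zero)
      with k1 show "z \<in> (\<lambda>k. b * k) ` {1..<?M div b}" using k by auto
    qed
    then have "card ?C \<le> card {1..<?M div b}"
      by (meson card_image_le card_mono finite_atLeastLessThan finite_imageI order_trans)
    then show ?thesis by simp
  qed
  moreover have "2 * (?M div b) \<le> ?M" using b2
    by (meson dual_order.trans mult_le_mono1 times_div_less_eq_dividend)
  moreover have "?M \<ge> b" using assms(2) b2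
    by (metis One_nat_def Suc_leI power_increasing power_one_right zero_less_diff zero_less_numeral le_trans one_le_numeral)
  then have "?M div b \<ge> 1" using b2 by (metis One_nat_def div_le_mono div_self not_numeral_le_zero)
  ultimately have "2 * card ?Z' \<ge> ?M" by linarith
  moreover have "card ?Z' \<le> card (Zset b m w)" using sub by (intro card_mono) (simp_all add: Zset_def)
  ultimately have "2 * card (Zset b m w) \<ge> ?M" by linarith
  then show ?thesis by linarith
qed


lemma AA_nonneg': assumes "\<And>j h. 1 \<le> j \<Longrightarrow> j \<le> d \<Longrightarrow> \<rho> j h \<ge> (0::real)" shows "AA N \<rho> y d t \<ge> 0"
  using assms
proof (induction d arbitrary: t)
  case 0 then show ?case by simp
next
  case (Suc d)
  have "AA N \<rho> y d s \<ge> 0" for s using Suc.prems by (intro Suc.IH) auto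
  then show ?case using Suc.prems[of "Suc d"] by (auto intro!: sum_nonneg mult_nonneg_nonneg)
qed

lemma AA_step_rho:
  "AA N (rho \<beta> \<gamma>) y (Suc d) 0 = \<beta> (Suc d) * AA N (rho \<beta> \<gamma>) y d 0
     + \<gamma> (Suc d) * (\<Sum>g\<in>freqs N. AA N (rho \<beta> \<gamma>) y d (g * y (Suc d)) / real_of_int \<bar>g\<bar>)"
proof -
  have "AA N (rho \<beta> \<gamma>) y (Suc d) 0 = \<beta> (Suc d) * AA N (rho \<beta> \<gamma>) y d 0
       + (\<Sum>g\<in>freqs N. rho \<beta> \<gamma> (Suc d) g * AA N (rho \<beta> \<gamma>) y d (g * y (Suc d)))"
    by (simp add: FF_def rho_def)
  also have "(\<Sum>g\<in>freqs N. rho \<beta> \<gamma> (Suc d) g * AA N (rho \<beta> \<gamma>) y d (g * y (Suc d)))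
     = \<gamma> (Suc d) * (\<Sum>g\<in>freqs N. AA N (rho \<beta> \<gamma>) y d (g * y (Suc d)) / real_of_int \<bar>g\<bar>)"
    unfolding sum_distrib_left by (intro sum.cong refl) (auto simp: rho_def dest: freqs_nz)
  finally show ?thesis .
qed

lemma sum_FF_rho: "(\<Sum>h\<in>FF N. rho \<beta> \<gamma> j h) = \<beta> j + \<gamma> j * S_N N"
proof -
  have "(\<Sum>h\<in>FF N. rho \<beta> \<gamma> j h) = \<beta> j + (\<Sum>h\<in>freqs N. rho \<beta> \<gamma> j h)"
    by (simp add: FF_def rho_def)
  also have "(\<Sum>h\<in>freqs N. rho \<beta> \<gamma> j h) = \<gamma> j * S_N N"
    unfolding S_N_def sum_distrib_left by (intro sum.cong refl) (auto simp: rho_def dest: freqs_nz)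
  finally show ?thesis .
qed

lemma AA_repr:
  assumes "N > 0"
  shows "AA N \<phi> y d x = (\<Sum>t<N. AA N \<phi> y d (int t) * (if int N dvd x - int t then 1 else 0))"
proof -
  let ?t0 = "nat (x mod int N)"
  have t0: "?t0 < N" using assms by (simp add: nat_less_iff)
  have iff: "int N dvd x - int t \<longleftrightarrow> t = ?t0" if "t < N" for t
  proof -
    have "int N dvd x - int t \<longleftrightarrow> x mod int N = int t mod int N" by (simp add: mod_eq_dvd_iff)
    also have "\<dots> \<longleftrightarrow> x mod int N = int t" using that by simp
    also have "\<dots> \<longleftrightarrow> t = ?t0" using assms by auto
    finally show ?thesis .
  qed
  have "(\<Sum>t<N. AA N \<phi> y d (int t) * (if int N dvd x - int t then 1 else 0))
      = (\<Sum>t<N. if t = ?t0 then AA N \<phi> y d (int t) else 0)"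
    by (intro sum.cong refl) (simp add: iff)
  also have "\<dots> = AA N \<phi> y d (int ?t0)" using t0 by simp
  also have "\<dots> = AA N \<phi> y d (x mod int N)" using assms by simp
  also have "\<dots> = AA N \<phi> y d x" by (rule AA_mod[OF assms])
  finally show ?thesis by simp
qed

lemma X_sum:
  assumes "prime b" "\<And>j h. 1 \<le> j \<Longrightarrow> j \<le> d \<Longrightarrow> \<rho> j h \<ge> (0::real)"
  shows "(\<Sum>z\<in>Zset b m w. \<Sum>g\<in>freqs (b^m). AA (b^m) \<rho> y d (g * int (b^w * z)) / real_of_int \<bar>g\<bar>)
         \<le> S_N (b^m) * (\<Sum>t<b^m. AA (b^m) \<rho> y d (int t))"
proof -
  let ?N = "b^m"
  have N0: "?N > 0" using assms(1) prime_gt_0_nat by simp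
  let ?A = "\<lambda>t. AA ?N \<rho> y d t"
  let ?K = "\<lambda>t::nat. (\<Sum>z\<in>Zset b m w. \<Sum>g\<in>freqs ?N.
            (if int ?N dvd g * int (b^w) * int z - int t then 1 / real_of_int \<bar>g\<bar> else 0))"
  have "(\<Sum>z\<in>Zset b m w. \<Sum>g\<in>freqs ?N. ?A (g * int (b^w * z)) / real_of_int \<bar>g\<bar>)
     = (\<Sum>z\<in>Zset b m w. \<Sum>g\<in>freqs ?N. \<Sum>t<?N. ?A (int t) *
          (if int ?N dvd g * int (b^w) * int z - int t then 1 / real_of_int \<bar>g\<bar> else 0))"
  proof (intro sum.cong refl)
    fix z g
    have "?A (g * int (b^w * z)) / real_of_int \<bar>g\<bar>
       = (\<Sum>t<?N. ?A (int t) * (if int ?N dvd g * int (b^w * z) - int t then 1 else 0)) / real_of_int \<bar>g\<bar>"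
      by (subst AA_repr[OF N0]) rule
    also have "\<dots> = (\<Sum>t<?N. ?A (int t) *
          (if int ?N dvd g * int (b^w) * int z - int t then 1 / real_of_int \<bar>g\<bar> else 0))"
      unfolding sum_divide_distrib by (intro sum.cong refl) (simp add: mult.assoc)
    finally show "?A (g * int (b^w * z)) / real_of_int \<bar>g\<bar> = (\<Sum>t<?N. ?A (int t) *
          (if int ?N dvd g * int (b^w) * int z - int t then 1 / real_of_int \<bar>g\<bar> else 0))" .
  qed
  also have "\<dots> = (\<Sum>z\<in>Zset b m w. \<Sum>t<?N. \<Sum>g\<in>freqs ?N. ?A (int t) *
          (if int ?N dvd g * int (b^w) * int z - int t then 1 / real_of_int \<bar>g\<bar> else 0))"
    by (intro sum.cong refl) (rule sum.swap)
  also have "\<dots> = (\<Sum>t<?N. \<Sum>z\<in>Zset b m w. \<Sum>g\<in>freqs ?N. ?A (int t) *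
          (if int ?N dvd g * int (b^w) * int z - int t then 1 / real_of_int \<bar>g\<bar> else 0))"
    by (rule sum.swap)
  also have "\<dots> = (\<Sum>t<?N. ?A (int t) * ?K t)"
    by (simp only: sum_distrib_left)
  also have "\<dots> \<le> (\<Sum>t<?N. ?A (int t) * S_N ?N)"
    by (intro sum_mono mult_left_mono K_bound assms(1) AA_nonneg') (use assms(2) in auto)
  finally show ?thesis by (simp add: sum_distrib_left mult.commute)
qed


lemma base_X:
  assumes "prime b"
  shows "(\<Sum>g\<in>freqs (b^m). (if int (b^m) dvd g * int (b^W) then 1 else 0) / real_of_int \<bar>g\<bar>)
         \<le> S_N (b^m) * (2 * real b ^ min W m) / real (b^m)"
proof (cases "W < m")
  case False
  then have mn: "min W m = m" by simp
  have b0: "b > 0" using assms prime_gt_0_nat by blast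
  have "(\<Sum>g\<in>freqs (b^m). (if int (b^m) dvd g * int (b^W) then 1 else 0) / real_of_int \<bar>g\<bar>)
        \<le> (\<Sum>g\<in>freqs (b^m). 1 / real_of_int \<bar>g\<bar>)"
    by (intro sum_mono) (auto simp: divide_right_mono)
  also have "\<dots> = S_N (b^m)" by (simp add: S_N_def)
  also have "\<dots> \<le> S_N (b^m) * (2 * real b ^ min W m) / real (b^m)"
    using b0 S_N_nonneg[of "b^m"] by (simp add: mn)
  finally show ?thesis .
next
  case True
  let ?M = "b^(m-W)"
  have b0: "b > 0" using assms prime_gt_0_nat by blast
  have NBM: "b^m = b^W * ?M" using True by (simp add: power_add[symmetric])
  have M0: "?M > 0" using b0 by simp
  have "(\<Sum>g\<in>freqs (b^m). (if int (b^m) dvd g * int (b^W) then 1 else 0) / real_of_int \<bar>g\<bar>)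
        \<le> (\<Sum>g\<in>freqs (b^m). (if int ?M dvd g then (1 / real ?M) * (real_of_int (int ?M) / real_of_int \<bar>g\<bar>) else 0))"
  proof (intro sum_mono)
    fix g assume g: "g \<in> freqs (b^m)"
    show "(if int (b^m) dvd g * int (b^W) then 1 else 0) / real_of_int \<bar>g\<bar>
       \<le> (if int ?M dvd g then (1 / real ?M) * (real_of_int (int ?M) / real_of_int \<bar>g\<bar>) else 0)"
    proof (cases "int (b^m) dvd g * int (b^W)")
      case True
      then have "int (b^W) * int ?M dvd int (b^W) * g" using NBM by (simp add: mult.commute)
      then have "int ?M dvd g" using b0 by simp
      then show ?thesis using True M0 b0 by simp
    next
      case False
      then show ?thesis by (auto intro!: mult_nonneg_nonneg)
    qed
  qed
  also have "\<dots> = (1 / real ?M) * (\<Sum>g\<in>{g\<in>freqs (b^m). int ?M dvd g}. real_of_int (int ?M) / real_of_int \<bar>g\<bar>)"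
    unfolding sum_distrib_left sum.inter_filter[OF finite_freqs] by (intro sum.cong refl) simp
  also have "\<dots> \<le> (1 / real ?M) * S_N (b^m)"
    using M0 by (intro mult_left_mono divisor_sum) auto
  also have "\<dots> \<le> S_N (b^m) * (2 * real b ^ min W m) / real (b^m)"
  proof -
    have "real (b^m) = real b ^ W * real ?M" using NBM by simp
    moreover have "min W m = W" using True by simp
    ultimately have eq: "S_N (b^m) * (2 * real b ^ min W m) / real (b^m) = 2 * S_N (b^m) / real ?M"
      using b0 by (simp add: field_simps)
    have "(1 / real ?M) * S_N (b^m) \<le> 2 * S_N (b^m) / real ?M"
      using S_N_nonneg[of "b^m"] M0 by (simp add: divide_right_mono)
    then show ?thesis by (simp only: eq)
  qed
  finally show ?thesis .
qed

lemma cardZ2: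
  assumes "prime b"
  shows "real (card (Zset b m W)) * (2 * real b ^ min W m) \<ge> real (b^m)" and "card (Zset b m W) > 0"
proof -
  have b0: "b > 0" using assms prime_gt_0_nat by blast
  have "real (card (Zset b m W)) * (2 * real b ^ min W m) \<ge> real (b^m) \<and> card (Zset b m W) > 0"
  proof (cases "W < m")
    case False
    then show ?thesis by (simp add: Zset_def)
  next
    case True
    have NBM: "real (b^m) = real b ^ W * real (b^(m-W))" using True by (simp add: power_add[symmetric])
    have c: "real (card (Zset b m W)) \<ge> real (b^(m-W)) / 2" by (rule card_Z[OF assms True])
    have "real (b^(m-W)) > 0" using b0 by simp
    then have "card (Zset b m W) > 0" using c by linarith
    moreover have "real (card (Zset b m W)) * (2 * real b ^ W) \<ge> real (b^(m-W)) / 2 * (2 * real b ^ W)"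
      using c b0 by (intro mult_right_mono) auto
    ultimately show ?thesis using True NBM by (simp add: mult_ac)
  qed
  then show "real (card (Zset b m W)) * (2 * real b ^ min W m) \<ge> real (b^m)" and "card (Zset b m W) > 0" by auto
qed


lemma cbc:
  fixes b m s :: nat and \<gamma> :: "nat \<Rightarrow> real" and w z :: "nat \<Rightarrow> nat"
  assumes b: "prime b"
    and gpos: "\<forall>j\<ge>1. 0 < \<gamma> j \<and> \<gamma> j \<le> 1"
    and z1: "z 1 = 1"
    and mini: "\<forall>d\<in>{1..<s}. z (d + 1) \<in> Zset b m (w (d + 1)) \<and>
           (\<forall>z'\<in>Zset b m (w (d + 1)).
              Re (R_crit (d + 1) (b ^ m) (\<lambda>j. 1 + \<gamma> j) \<gamma>
                    (\<lambda>j. int (b ^ w j * z j)))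
              \<le> Re (R_crit (d + 1) (b ^ m) (\<lambda>j. 1 + \<gamma> j) \<gamma>
                    (\<lambda>j. if j = d + 1 then int (b ^ w j * z') else int (b ^ w j * z j))))"
  shows "d \<le> s \<Longrightarrow> AA (b^m) (rho (\<lambda>j. 1 + \<gamma> j) \<gamma>) (\<lambda>j. int (b ^ w j * z j)) d 0 - (\<Prod>j\<in>{1..d}. 1 + \<gamma> j)
        \<le> (\<Prod>j\<in>{1..d}. (1 + \<gamma> j) + (1 + 2 * real b ^ min (w j) m) * \<gamma> j * S_N (b ^ m)) / real (b^m)"
proof (induction d)
  case 0
  then show ?case by simp
next
  case (Suc d)
  let ?N = "b^m"
  let ?\<beta> = "\<lambda>j. 1 + \<gamma> j"
  let ?\<rho> = "rho ?\<beta> \<gamma>"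
  let ?y = "\<lambda>j. int (b ^ w j * z j)"
  let ?A = "\<lambda>t. AA ?N ?\<rho> ?y d t"
  let ?X = "\<Sum>g\<in>freqs ?N. ?A (g * ?y (Suc d)) / real_of_int \<bar>g\<bar>"
  let ?S = "S_N ?N"
  let ?W = "w (Suc d)"
  let ?cm = "real b ^ min ?W m"
  let ?Gd = "\<gamma> (Suc d)"
  let ?Bd = "1 + \<gamma> (Suc d)"
  let ?Qp = "\<Sum>t<?N. ?A (int t)"
  let ?Q = "\<lambda>d. \<Prod>j\<in>{1..d}. (1 + \<gamma> j) + (1 + 2 * real b ^ min (w j) m) * \<gamma> j * S_N (b ^ m)"
  have b0: "b > 0" using b prime_gt_0_nat by blast
  have N0: "?N > 0" using b0 by simp
  have IH: "?A 0 - (\<Prod>j\<in>{1..d}. ?\<beta> j) \<le> ?Q d / real ?N" using Suc by simp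
  have rho_nn: "?\<rho> j h \<ge> 0" if "1 \<le> j" for j h
    using gpos that by (auto simp: rho_def)
  have Gd: "0 < ?Gd" "?Gd \<le> 1" using gpos by auto
  have S0: "?S \<ge> 0" by (rule S_N_nonneg)
  have cm0: "?cm \<ge> 0" by simp
  have step: "AA ?N ?\<rho> ?y (Suc d) 0 = ?Bd * ?A 0 + ?Gd * ?X" by (rule AA_step_rho)
  have prodS: "(\<Prod>j\<in>{1..Suc d}. ?\<beta> j) = (\<Prod>j\<in>{1..d}. ?\<beta> j) * ?Bd" by (simp add: prod.cl_ivl_Suc)
  have QS: "?Q (Suc d) = ?Q d * (?Bd + (1 + 2 * ?cm) * ?Gd * ?S)" by (simp add: prod.cl_ivl_Suc)
  have Qp_eq: "?Qp = (\<Prod>j\<in>{1..d}. ?\<beta> j + \<gamma> j * ?S)"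
    by (simp add: AA_sum[OF N0] sum_FF_rho)
  have Qp_le: "?Qp \<le> ?Q d" unfolding Qp_eq
  proof (intro prod_mono conjI)
    fix j assume j: "j \<in> {1..d}"
    then have "\<gamma> j > 0" using gpos by auto
    then show "0 \<le> ?\<beta> j + \<gamma> j * ?S" using S0 by simp
    have "\<gamma> j * ?S \<le> (1 + 2 * real b ^ min (w j) m) * \<gamma> j * ?S"
      using \<open>\<gamma> j > 0\<close> S0 by (simp add: mult_right_mono mult_left_mono)
    then show "?\<beta> j + \<gamma> j * ?S \<le> (1 + \<gamma> j) + (1 + 2 * real b ^ min (w j) m) * \<gamma> j * ?S" by simp
  qed
  have Qp0: "?Qp \<ge> 0" using rho_nn by (intro sum_nonneg AA_nonneg') auto
  have keyX: "?Gd * ?X \<le> ?Gd * ?S * ?Qp * (2 * ?cm) / real ?N"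
  proof (cases "d = 0")
    case True
    then have Qp1: "?Qp = 1" using Qp_eq by simp
    have "?X = (\<Sum>g\<in>freqs ?N. (if int ?N dvd g * int (b^?W) then 1 else 0) / real_of_int \<bar>g\<bar>)"
      using True z1 by simp
    also have "\<dots> \<le> ?S * (2 * ?cm) / real ?N" by (rule base_X[OF b])
    finally have "?Gd * ?X \<le> ?Gd * (?S * (2 * ?cm) / real ?N)" using Gd by (intro mult_left_mono) auto
    then show ?thesis using Qp1 by simp
  next
    case False
    then have dI: "d \<in> {1..<s}" using Suc.prems by auto
    have minz: "?Gd * ?X \<le> ?Gd * (\<Sum>g\<in>freqs ?N. ?A (g * int (b^?W * z')) / real_of_int \<bar>g\<bar>)"
      if z': "z' \<in> Zset b m ?W" for z'
    proof -
      let ?y' = "\<lambda>j. if j = d + 1 then int (b ^ w j * z') else int (b ^ w j * z j)"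
      have le: "Re (R_crit (d + 1) ?N ?\<beta> \<gamma> ?y) \<le> Re (R_crit (d + 1) ?N ?\<beta> \<gamma> ?y')"
        using mini dI z' by auto
      have eqA: "AA ?N ?\<rho> ?y' d t = ?A t" for t
        by (intro AA_cong_y) auto
      have step': "AA ?N ?\<rho> ?y' (Suc d) 0 = ?Bd * ?A 0
          + ?Gd * (\<Sum>g\<in>freqs ?N. ?A (g * int (b^?W * z')) / real_of_int \<bar>g\<bar>)"
      proof -
        have s1: "AA ?N ?\<rho> ?y' (Suc d) 0 = ?Bd * AA ?N ?\<rho> ?y' d 0
           + ?Gd * (\<Sum>g\<in>freqs ?N. AA ?N ?\<rho> ?y' d (g * ?y' (Suc d)) / real_of_int \<bar>g\<bar>)"
          by (rule AA_step_rho)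
        have yS: "?y' (Suc d) = int (b^?W * z')" by simp
        show ?thesis by (simp only: s1 eqA yS)
      qed
      from le have "AA ?N ?\<rho> ?y (Suc d) 0 \<le> AA ?N ?\<rho> ?y' (Suc d) 0"
        unfolding Re_R_crit[OF N0] by simp
      then show ?thesis using step step' by simp
    qed
    let ?Z = "Zset b m ?W"
    have cZ: "real (card ?Z) * (2 * ?cm) \<ge> real ?N" "card ?Z > 0" using cardZ2[OF b] by auto
    have "real (card ?Z) * (?Gd * ?X) = (\<Sum>z'\<in>?Z. ?Gd * ?X)" by simp
    also have "\<dots> \<le> (\<Sum>z'\<in>?Z. ?Gd * (\<Sum>g\<in>freqs ?N. ?A (g * int (b^?W * z')) / real_of_int \<bar>g\<bar>))"
      by (intro sum_mono minz)
    also have "\<dots> = ?Gd * (\<Sum>z'\<in>?Z. \<Sum>g\<in>freqs ?N. ?A (g * int (b^?W * z')) / real_of_int \<bar>g\<bar>)"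
      by (simp add: sum_distrib_left)
    also have "\<dots> \<le> ?Gd * (?S * ?Qp)"
      using Gd rho_nn by (intro mult_left_mono X_sum[OF b]) auto
    finally have cX: "real (card ?Z) * (?Gd * ?X) \<le> ?Gd * ?S * ?Qp" by (simp add: mult_ac)
    have T0: "?Gd * ?S * ?Qp \<ge> 0" using Gd S0 Qp0 by simp
    have "?Gd * ?X \<le> ?Gd * ?S * ?Qp / real (card ?Z)"
      using cX cZ(2) by (simp add: field_simps)
    also have "\<dots> \<le> ?Gd * ?S * ?Qp * (2 * ?cm) / real ?N"
    proof -
      have "?Gd * ?S * ?Qp * real ?N \<le> ?Gd * ?S * ?Qp * (real (card ?Z) * (2 * ?cm))"
        using T0 cZ(1) by (intro mult_left_mono) auto
      then show ?thesis using cZ(2) N0 by (simp add: field_simps)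
    qed
    finally show ?thesis .
  qed
  have "AA ?N ?\<rho> ?y (Suc d) 0 - (\<Prod>j\<in>{1..Suc d}. ?\<beta> j)
      = ?Bd * (?A 0 - (\<Prod>j\<in>{1..d}. ?\<beta> j)) + ?Gd * ?X"
    using step prodS by (simp add: algebra_simps)
  also have "\<dots> \<le> ?Bd * (?Q d / real ?N) + ?Gd * ?S * ?Qp * (2 * ?cm) / real ?N"
    using IH keyX Gd by (intro add_mono mult_left_mono) auto
  also have "\<dots> \<le> ?Bd * (?Q d / real ?N) + ?Gd * ?S * ?Q d * (2 * ?cm) / real ?N"
  proof -
    have "?Gd * ?S * ?Qp * (2 * ?cm) \<le> ?Gd * ?S * ?Q d * (2 * ?cm)"
      using Qp_le Gd S0 cm0 by (intro mult_right_mono mult_left_mono) auto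
    then have "?Gd * ?S * ?Qp * (2 * ?cm) / real ?N \<le> ?Gd * ?S * ?Q d * (2 * ?cm) / real ?N"
      by (rule divide_right_mono) simp
    then show ?thesis by (rule add_left_mono)
  qed
  also have "\<dots> \<le> ?Q (Suc d) / real ?N"
  proof -
    have Qd0: "?Q d \<ge> 0" using Qp_le Qp0 by linarith
    have e1: "?Q d * (?Bd + (1 + 2 * ?cm) * ?Gd * ?S) = ?Bd * ?Q d + ?Gd * ?S * ?Q d * (2 * ?cm) + ?Q d * ?Gd * ?S"
      by (simp add: algebra_simps)
    have "?Q d * ?Gd * ?S \<ge> 0" using Qd0 Gd S0 by simp
    then have "?Bd * ?Q d + ?Gd * ?S * ?Q d * (2 * ?cm) \<le> ?Q d * (?Bd + (1 + 2 * ?cm) * ?Gd * ?S)"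
      using e1 by linarith
    then have "(?Bd * ?Q d + ?Gd * ?S * ?Q d * (2 * ?cm)) / real ?N \<le> ?Q d * (?Bd + (1 + 2 * ?cm) * ?Gd * ?S) / real ?N"
      by (rule divide_right_mono) simp
    moreover have "?Bd * (?Q d / real ?N) + ?Gd * ?S * ?Q d * (2 * ?cm) / real ?N
        = (?Bd * ?Q d + ?Gd * ?S * ?Q d * (2 * ?cm)) / real ?N" by (simp add: add_divide_distrib)
    ultimately show ?thesis unfolding QS by simp
  qed
  finally show ?case .
qed


lemma jordan:
  fixes x :: real
  assumes "0 \<le> x" "x \<le> pi / 2"
  shows "2 / pi * x \<le> sin x"
proof -
  have conc: "concave_on {0..pi} sin"
    by (rule f''_le0_imp_concave[where f'=cos and f''="\<lambda>x. - sin x"])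
       (auto intro!: derivative_eq_intros sin_ge_zero)
  define t where "t = 2 / pi * x"
  have t: "0 \<le> t" "t \<le> 1" using assms pi_gt_zero unfolding t_def by (auto simp: field_simps)
  have "(1 - t) * sin 0 + t * sin (pi / 2) \<le> sin ((1 - t) *\<^sub>R 0 + t *\<^sub>R (pi / 2))"
    by (rule concave_onD[OF conc t]) (use pi_gt_zero in auto)
  moreover have "t *\<^sub>R (pi / 2) = x" unfolding t_def using pi_gt_zero by simp
  ultimately show ?thesis unfolding t_def by simp
qed

lemma norm_exp_i_minus_1: "norm (exp (\<i> * complex_of_real \<theta>) - 1) = 2 * \<bar>sin (\<theta> / 2)\<bar>"
proof -
  have e: "exp (\<i> * complex_of_real \<theta>) = Complex (cos \<theta>) (sin \<theta>)"
    by (simp add: cis_conv_exp[symmetric] complex_eq_iff)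
  have "(norm (exp (\<i> * complex_of_real \<theta>) - 1))\<^sup>2 = (cos \<theta> - 1)\<^sup>2 + (sin \<theta>)\<^sup>2"
    unfolding e by (simp add: cmod_def)
  also have "\<dots> = 2 - 2 * cos \<theta>"
  proof -
    have "(sin \<theta>)\<^sup>2 + (cos \<theta>)\<^sup>2 = 1" by (rule sin_cos_squared_add)
    moreover have "(cos \<theta> - 1)\<^sup>2 = (cos \<theta>)\<^sup>2 - 2 * cos \<theta> + 1" by (simp add: power2_diff)
    ultimately show ?thesis by linarith
  qed
  also have "\<dots> = (2 * \<bar>sin (\<theta> / 2)\<bar>)\<^sup>2"
  proof -
    have "cos \<theta> = 1 - 2 * sin (\<theta>/2) ^ 2" using cos_double_sin[of "\<theta>/2"] by simp
    moreover have "(2 * \<bar>sin (\<theta> / 2)\<bar>)\<^sup>2 = 4 * sin (\<theta>/2) ^ 2" by (simp add: power_mult_distrib)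
    ultimately show ?thesis by linarith
  qed
  finally have sq: "(norm (exp (\<i> * complex_of_real \<theta>) - 1))\<^sup>2 = (2 * \<bar>sin (\<theta> / 2)\<bar>)\<^sup>2" .
  show ?thesis using power2_eq_iff_nonneg[THEN iffD1, OF _ _ sq] by simp
qed


definition chi :: "nat \<Rightarrow> nat \<Rightarrow> int \<Rightarrow> complex" where
  "chi N a h = (1 / of_nat N) * (\<Sum>s<a. ee N (- (h * int s)))"

lemma FF_iff: assumes "N > 0" shows "h \<in> FF N \<longleftrightarrow> - int N < 2 * h \<and> 2 * h \<le> int N"
proof -
  have "h \<in> freqs N \<longleftrightarrow> (- int N < 2 * h \<and> 2 * h \<le> int N) \<and> h \<noteq> 0"
  proof -
    have "- (real N / 2) < real_of_int h \<longleftrightarrow> - int N < 2 * h" by linarith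
    moreover have "real_of_int h \<le> real N / 2 \<longleftrightarrow> 2 * h \<le> int N" by linarith
    ultimately show ?thesis unfolding freqs_def by auto
  qed
  then show ?thesis unfolding FF_def using assms by auto
qed

lemma bij_FF: assumes "N > 0" shows "bij_betw (\<lambda>h. nat (h mod int N)) (FF N) {..<N}"
proof (rule bij_betw_imageI)
  show "inj_on (\<lambda>h. nat (h mod int N)) (FF N)"
  proof
    fix h1 h2 assume h: "h1 \<in> FF N" "h2 \<in> FF N" "nat (h1 mod int N) = nat (h2 mod int N)"
    then have "int (nat (h1 mod int N)) = int (nat (h2 mod int N))" by simp
    then have "h1 mod int N = h2 mod int N" using assms by simp
    then have "int N dvd h1 - h2" by (simp add: mod_eq_dvd_iff)
    then obtain q where q: "h1 - h2 = int N * q" by (auto elim!: dvdE)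
    have b1: "- int N < 2 * h1" "2 * h1 \<le> int N" "- int N < 2 * h2" "2 * h2 \<le> int N"
      using h(1,2) FF_iff[OF assms] by auto
    have "q = 0"
    proof (rule ccontr)
      assume "q \<noteq> 0"
      then have "\<bar>int N * q\<bar> \<ge> int N" using assms by (simp add: abs_mult)
      then show False using q b1 by linarith
    qed
    then show "h1 = h2" using q by simp
  qed
  show "(\<lambda>h. nat (h mod int N)) ` FF N = {..<N}"
  proof
    show "(\<lambda>h. nat (h mod int N)) ` FF N \<subseteq> {..<N}" using assms by (auto simp: nat_less_iff)
    show "{..<N} \<subseteq> (\<lambda>h. nat (h mod int N)) ` FF N"
    proof
      fix k assume k: "k \<in> {..<N}"
      define h where "h = (if 2 * int k \<le> int N then int k else int k - int N)"
      have "h \<in> FF N" unfolding FF_iff[OF assms] h_def using k by auto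
      moreover have "nat (h mod int N) = k"
      proof -
        have "h mod int N = int k mod int N" unfolding h_def by (auto simp: mod_diff_right_eq[symmetric])
        then show ?thesis using k by simp
      qed
      ultimately show "k \<in> (\<lambda>h. nat (h mod int N)) ` FF N" by force
    qed
  qed
qed

lemma orth_FF: assumes "N > 0"
  shows "(\<Sum>h\<in>FF N. ee N (h * x)) = (if int N dvd x then of_nat N else 0)"
proof -
  have "(\<Sum>h\<in>FF N. ee N (h * x)) = (\<Sum>h\<in>FF N. ee N (int (nat (h mod int N)) * x))"
  proof (intro sum.cong refl)
    fix h
    have "int (nat (h mod int N)) = h mod int N" using assms by simp
    then have "(int (nat (h mod int N)) * x) mod int N = (h * x) mod int N"
      by (simp add: mod_mult_left_eq)
    then show "ee N (h * x) = ee N (int (nat (h mod int N)) * x)"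
      using ee_cong[OF assms] by metis
  qed
  also have "\<dots> = (\<Sum>k<N. ee N (int k * x))"
    by (rule sum.reindex_bij_betw[OF bij_FF[OF assms], where g="\<lambda>k. ee N (int k * x)"])
  finally show ?thesis using orth_k[OF assms] by simp
qed

lemma chi_expand:
  assumes "N > 0" "a \<le> N"
  shows "(\<Sum>h\<in>FF N. chi N a h * ee N (h * t)) = (if t mod int N < int a then 1 else 0)"
proof -
  have "(\<Sum>h\<in>FF N. chi N a h * ee N (h * t)) = (1 / of_nat N) * (\<Sum>s<a. \<Sum>h\<in>FF N. ee N (h * (t - int s)))"
    unfolding chi_def sum_distrib_left sum_distrib_right
    by (subst sum.swap) (intro sum.cong refl, simp add: ee_add[symmetric] algebra_simps)
  also have "\<dots> = (1 / of_nat N) * (\<Sum>s<a. if int N dvd t - int s then of_nat N else 0)"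
    by (simp add: orth_FF[OF assms(1)])
  also have "\<dots> = (\<Sum>s<a. if s = nat (t mod int N) then 1 else 0)"
  proof -
    have iff: "int N dvd t - int s \<longleftrightarrow> s = nat (t mod int N)" if "s < a" for s
    proof -
      have sN: "s < N" using that assms by simp
      have "int N dvd t - int s \<longleftrightarrow> t mod int N = int s mod int N" by (simp add: mod_eq_dvd_iff)
      also have "\<dots> \<longleftrightarrow> t mod int N = int s" using sN by simp
      also have "\<dots> \<longleftrightarrow> s = nat (t mod int N)" using assms by auto
      finally show ?thesis .
    qed
    show ?thesis unfolding sum_distrib_left using assms(1)
      by (intro sum.cong refl) (auto simp: iff)
  qed
  also have "\<dots> = (if t mod int N < int a then 1 else 0)"
    using assms(1) by (auto simp: nat_less_iff)
  finally show ?thesis .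
qed


lemma norm_ee: "norm (ee N x) = 1"
  unfolding ee_def by (simp add: norm_exp_eq_Re)

lemma chi_bound:
  assumes "N > 0" "h \<in> freqs N"
  shows "norm (chi N a h) \<le> 1 / (2 * real_of_int \<bar>h\<bar>)"
proof -
  let ?q = "ee N (- h)"
  have hb: "- (real N / 2) < real_of_int h" "real_of_int h \<le> real N / 2" "h \<noteq> 0"
    using assms(2) unfolding freqs_def by auto
  have habs: "0 < real_of_int \<bar>h\<bar>" "real_of_int \<bar>h\<bar> \<le> real N / 2" using hb by auto
  have q1: "?q \<noteq> 1"
  proof
    assume "?q = 1"
    then have "int N dvd - h" using ee_eq_1_iff[OF assms(1)] by simp
    then have "int N dvd \<bar>h\<bar>" by simp
    then have "int N \<le> \<bar>h\<bar>" using hb(3) by (simp add: zdvd_imp_le)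
    then show False using habs by linarith
  qed
  have sumq: "(\<Sum>s<a. ee N (- (h * int s))) = (?q ^ a - 1) / (?q - 1)"
  proof -
    have "(\<Sum>s<a. ee N (- (h * int s))) = (\<Sum>s<a. ?q ^ s)"
      by (intro sum.cong refl) (metis ee_pow mult.commute mult_minus_right)
    also have "\<dots> = (?q ^ a - 1) / (?q - 1)" using q1 by (rule geometric_sum)
    finally show ?thesis .
  qed
  have num: "norm (?q ^ a - 1) \<le> 2"
    using norm_triangle_ineq4[of "?q ^ a" 1] by (simp add: norm_power norm_ee)
  define \<theta> where "\<theta> = - 2 * pi * real_of_int h / real N"
  have qexp: "?q = exp (\<i> * complex_of_real \<theta>)"
    unfolding ee_def \<theta>_def by (simp add: field_simps)
  have "norm (?q - 1) = 2 * \<bar>sin (\<theta> / 2)\<bar>" unfolding qexp by (rule norm_exp_i_minus_1)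
  also have "\<bar>sin (\<theta> / 2)\<bar> = sin (pi * real_of_int \<bar>h\<bar> / real N)"
  proof -
    have "\<theta> / 2 = - (pi * real_of_int h / real N)" unfolding \<theta>_def by simp
    then have "\<bar>sin (\<theta> / 2)\<bar> = \<bar>sin (pi * real_of_int h / real N)\<bar>" by simp
    also have "\<dots> = sin (pi * real_of_int \<bar>h\<bar> / real N)"
    proof (cases "h \<ge> 0")
      case True
      then have "0 \<le> pi * real_of_int h / real N" "pi * real_of_int h / real N \<le> pi"
        using assms(1) habs by (auto simp: field_simps)
      then have "sin (pi * real_of_int h / real N) \<ge> 0" by (rule sin_ge_zero)
      then show ?thesis using True by simp
    next
      case False
      have r: "real_of_int \<bar>h\<bar> / real N \<le> 1" using assms(1) habs by (simp add: divide_le_eq)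
      have "0 \<le> pi * real_of_int \<bar>h\<bar> / real N" using habs by simp
      moreover have "pi * (real_of_int \<bar>h\<bar> / real N) \<le> pi * 1" using r by (intro mult_left_mono) auto
      ultimately have "sin (pi * real_of_int \<bar>h\<bar> / real N) \<ge> 0" by (intro sin_ge_zero) auto
      moreover have "pi * real_of_int h / real N = - (pi * real_of_int \<bar>h\<bar> / real N)" using False by simp
      ultimately show ?thesis by simp
    qed
    finally show ?thesis .
  qed
  finally have nq: "norm (?q - 1) = 2 * sin (pi * real_of_int \<bar>h\<bar> / real N)" .
  have "2 / pi * (pi * real_of_int \<bar>h\<bar> / real N) \<le> sin (pi * real_of_int \<bar>h\<bar> / real N)"
    using assms(1) habs by (intro jordan) (auto simp: field_simps)
  then have js: "2 * real_of_int \<bar>h\<bar> / real N \<le> sin (pi * real_of_int \<bar>h\<bar> / real N)" by simp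
  have den: "4 * real_of_int \<bar>h\<bar> / real N \<le> norm (?q - 1)" using nq js by simp
  have denpos: "0 < 4 * real_of_int \<bar>h\<bar> / real N" using habs assms(1) by simp
  have "norm (chi N a h) = (1 / real N) * (norm (?q ^ a - 1) / norm (?q - 1))"
    unfolding chi_def sumq by (simp add: norm_divide norm_mult)
  also have "\<dots> \<le> (1 / real N) * (2 / (4 * real_of_int \<bar>h\<bar> / real N))"
    using num den denpos by (intro mult_left_mono frac_le) auto
  also have "\<dots> = 1 / (2 * real_of_int \<bar>h\<bar>)" using assms(1) habs by (simp add: field_simps)
  finally show ?thesis .
qed


lemma AA_Suc_split:
  "AA N \<phi> y (Suc d) t = \<phi> (Suc d) 0 * AA N \<phi> y d t + (\<Sum>h\<in>freqs N. \<phi> (Suc d) h * AA N \<phi> y d (t + h * y (Suc d)))"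
  unfolding AA.simps(2) FF_def by (subst sum.insert) auto

lemma AA_abs_le:
  fixes \<phi> :: "nat \<Rightarrow> int \<Rightarrow> complex" and \<rho> :: "nat \<Rightarrow> int \<Rightarrow> real"
  assumes "\<And>j h. 1 \<le> j \<Longrightarrow> j \<le> d \<Longrightarrow> h \<in> FF N \<Longrightarrow> norm (\<phi> j h) \<le> \<rho> j h"
  shows "norm (AA N \<phi> y d t) \<le> AA N \<rho> y d t"
  using assms
proof (induction d arbitrary: t)
  case 0 then show ?case by simp
next
  case (Suc d)
  have IH: "norm (AA N \<phi> y d s) \<le> AA N \<rho> y d s" for s using Suc.prems by (intro Suc.IH) auto
  have "norm (AA N \<phi> y (Suc d) t) \<le> (\<Sum>h\<in>FF N. norm (\<phi> (Suc d) h) * norm (AA N \<phi> y d (t + h * y (Suc d))))"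
    by (simp add: norm_mult[symmetric] norm_sum)
  also have "\<dots> \<le> (\<Sum>h\<in>FF N. \<rho> (Suc d) h * AA N \<rho> y d (t + h * y (Suc d)))"
  proof (intro sum_mono mult_mono IH)
    fix h assume "h \<in> FF N"
    then show "norm (\<phi> (Suc d) h) \<le> \<rho> (Suc d) h" using Suc.prems[of "Suc d" h] by simp
    then show "0 \<le> \<rho> (Suc d) h" using norm_ge_zero order_trans by blast
  qed simp
  finally show ?case by simp
qed

lemma AA_half:
  fixes \<phi> :: "nat \<Rightarrow> int \<Rightarrow> complex" and \<rho> :: "nat \<Rightarrow> int \<Rightarrow> real"
  assumes h0: "\<And>j. 1 \<le> j \<Longrightarrow> j \<le> d \<Longrightarrow> norm (\<phi> j 0) \<le> \<rho> j 0"
    and hf: "\<And>j h. 1 \<le> j \<Longrightarrow> j \<le> d \<Longrightarrow> h \<in> freqs N \<Longrightarrow> 2 * norm (\<phi> j h) \<le> \<rho> j h"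
  shows "norm (AA N \<phi> y d t - (if int N dvd t then (\<Prod>j\<in>{1..d}. \<phi> j 0) else 0))
         \<le> (AA N \<rho> y d t - (if int N dvd t then (\<Prod>j\<in>{1..d}. \<rho> j 0) else 0)) / 2"
  using h0 hf
proof (induction d arbitrary: t)
  case 0 then show ?case by simp
next
  case (Suc d)
  let ?P = "if int N dvd t then (\<Prod>j\<in>{1..d}. \<phi> j 0) else 0"
  let ?Pr = "if int N dvd t then (\<Prod>j\<in>{1..d}. \<rho> j 0) else 0"
  have IH: "norm (AA N \<phi> y d t - ?P) \<le> (AA N \<rho> y d t - ?Pr) / 2"
    using Suc.prems by (intro Suc.IH) auto
  have D0: "0 \<le> (AA N \<rho> y d t - ?Pr) / 2" using IH norm_ge_zero order_trans by blast
  have ab: "norm (AA N \<phi> y d s) \<le> AA N \<rho> y d s" for s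
  proof (rule AA_abs_le)
    fix j h assume j: "1 \<le> j" "j \<le> d" and h: "h \<in> FF N"
    show "norm (\<phi> j h) \<le> \<rho> j h"
    proof (cases "h = 0")
      case True then show ?thesis using Suc.prems(1)[of j] j by simp
    next
      case False
      then have "h \<in> freqs N" using h by (simp add: FF_def)
      then have "2 * norm (\<phi> j h) \<le> \<rho> j h" using Suc.prems(2)[of j h] j by simp
      then show ?thesis using norm_ge_zero[of "\<phi> j h"] by linarith
    qed
  qed
  have p0: "norm (\<phi> (Suc d) 0) \<le> \<rho> (Suc d) 0" using Suc.prems(1)[of "Suc d"] by simp
  have pf: "2 * norm (\<phi> (Suc d) h) \<le> \<rho> (Suc d) h" if "h \<in> freqs N" for h
    using Suc.prems(2)[of "Suc d" h] that by simp
  have PS: "(if int N dvd t then (\<Prod>j\<in>{1..Suc d}. \<phi> j 0) else 0) = \<phi> (Suc d) 0 * ?P"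
    by (simp add: prod.cl_ivl_Suc)
  have PrS: "(if int N dvd t then (\<Prod>j\<in>{1..Suc d}. \<rho> j 0) else 0) = \<rho> (Suc d) 0 * ?Pr"
    by (simp add: prod.cl_ivl_Suc)
  let ?T = "\<Sum>h\<in>freqs N. \<phi> (Suc d) h * AA N \<phi> y d (t + h * y (Suc d))"
  let ?Tr = "\<Sum>h\<in>freqs N. \<rho> (Suc d) h * AA N \<rho> y d (t + h * y (Suc d))"
  have "AA N \<phi> y (Suc d) t - \<phi> (Suc d) 0 * ?P = \<phi> (Suc d) 0 * (AA N \<phi> y d t - ?P) + ?T"
    unfolding AA_Suc_split by (simp add: algebra_simps)
  then have "norm (AA N \<phi> y (Suc d) t - \<phi> (Suc d) 0 * ?P) \<le> norm (\<phi> (Suc d) 0) * norm (AA N \<phi> y d t - ?P) + norm ?T"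
    using norm_triangle_ineq[of "\<phi> (Suc d) 0 * (AA N \<phi> y d t - ?P)" ?T] by (simp only: norm_mult)
  also have "\<dots> \<le> \<rho> (Suc d) 0 * ((AA N \<rho> y d t - ?Pr) / 2) + ?Tr / 2"
  proof (intro add_mono mult_mono p0 IH D0)
    have "norm ?T \<le> (\<Sum>h\<in>freqs N. norm (\<phi> (Suc d) h) * norm (AA N \<phi> y d (t + h * y (Suc d))))"
      by (simp add: norm_mult[symmetric] norm_sum)
    also have "\<dots> \<le> (\<Sum>h\<in>freqs N. (\<rho> (Suc d) h / 2) * AA N \<rho> y d (t + h * y (Suc d)))"
    proof (intro sum_mono mult_mono ab)
      fix h assume "h \<in> freqs N"
      then show "norm (\<phi> (Suc d) h) \<le> \<rho> (Suc d) h / 2" using pf by fastforce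
      then show "0 \<le> \<rho> (Suc d) h / 2" using norm_ge_zero order_trans by blast
    qed simp
    also have "\<dots> = ?Tr / 2" by (simp add: sum_divide_distrib)
    finally show "norm ?T \<le> ?Tr / 2" .
    show "0 \<le> \<rho> (Suc d) 0" using p0 norm_ge_zero order_trans by blast
  qed simp
  also have "\<dots> = (\<rho> (Suc d) 0 * (AA N \<rho> y d t - ?Pr) + ?Tr) / 2"
    by (simp only: add_divide_distrib times_divide_eq_right)
  also have "\<rho> (Suc d) 0 * (AA N \<rho> y d t - ?Pr) + ?Tr = AA N \<rho> y (Suc d) t - \<rho> (Suc d) 0 * ?Pr"
    unfolding AA_Suc_split by (simp only: right_diff_distrib)
  finally show ?case unfolding PS PrS .
qed


lemma frac_int_div:
  assumes "N > 0"
  shows "frac (real_of_int m / real N) = real_of_int (m mod int N) / real N"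
proof -
  have fl: "\<lfloor>real_of_int m / real N\<rfloor> = m div int N"
    using floor_divide_of_int_eq[of m "int N"] by simp
  have "real_of_int m = real N * real_of_int (m div int N) + real_of_int (m mod int N)"
    by (metis of_int_add of_int_mult of_int_of_nat_eq div_mult_mod_eq mult.commute)
  then have "real_of_int m / real N = real_of_int (m div int N) + real_of_int (m mod int N) / real N"
    using assms by (simp add: field_simps)
  then show ?thesis unfolding frac_def fl by simp
qed

lemma frac_cond:
  assumes "N > 0" "0 < x" 
  shows "frac (real k * real_of_int Y / real N) < x \<longleftrightarrow> (int k * Y) mod int N < int (nat \<lceil>real N * x\<rceil>)"
proof -
  have "frac (real k * real_of_int Y / real N) = real_of_int ((int k * Y) mod int N) / real N"
    using frac_int_div[OF assms(1), of "int k * Y"] by simp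
  then have "frac (real k * real_of_int Y / real N) < x \<longleftrightarrow> real_of_int ((int k * Y) mod int N) < real N * x"
    using assms by (simp add: divide_less_eq mult.commute)
  also have "\<dots> \<longleftrightarrow> (int k * Y) mod int N < \<lceil>real N * x\<rceil>" by (simp add: less_ceiling_iff)
  also have "\<dots> \<longleftrightarrow> (int k * Y) mod int N < int (nat \<lceil>real N * x\<rceil>)"
  proof -
    have "0 < real N * x" using assms by simp
    then have "\<lceil>real N * x\<rceil> \<ge> 0" by (simp add: zero_le_ceiling) 
    then show ?thesis by simp
  qed
  finally show ?thesis .
qed

lemma prod_diff:
  fixes p x :: "nat \<Rightarrow> real"
  assumes "finite u" "\<And>j. j \<in> u \<Longrightarrow> 0 \<le> x j \<and> x j \<le> p j \<and> p j \<le> 1 \<and> p j - x j \<le> \<delta>" "0 \<le> \<delta>" "\<delta> \<le> 1"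
  shows "(\<Prod>j\<in>u. p j) - (\<Prod>j\<in>u. x j) \<le> 1 - (1 - \<delta>) ^ card u"
  using assms(1,2)
proof (induction u rule: finite_induct)
  case empty then show ?case by simp
next
  case (insert i F)
  let ?P = "\<Prod>j\<in>F. p j" and ?X = "\<Prod>j\<in>F. x j" and ?c = "(1 - \<delta>) ^ card F"
  have IH: "?P - ?X \<le> 1 - ?c" using insert by auto
  have X0: "0 \<le> ?X" using insert.prems by (intro prod_nonneg) auto
  have XP: "?X \<le> ?P" using insert.prems by (intro prod_mono) auto
  have P1: "?P \<le> 1" using insert.prems by (intro prod_le_1) (auto intro: order_trans)
  have c0: "0 \<le> ?c" "?c \<le> 1" using assms(3,4) by (auto intro: power_le_one)
  have xi: "0 \<le> x i" "x i \<le> p i" "p i \<le> 1" "p i - x i \<le> \<delta>" using insert.prems[of i] by auto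
  have goal_eq: "1 - (1 - \<delta>) ^ card (insert i F) = 1 - (1 - \<delta>) * ?c" using insert by simp
  have "p i * ?P - x i * ?X \<le> 1 - (1 - \<delta>) * ?c"
  proof (cases "p i \<le> \<delta>")
    case True
    have "x i * ?X \<ge> 0" using xi X0 by simp
    moreover have "p i * ?P \<le> \<delta> * 1" using True P1 xi X0 XP by (intro mult_mono) auto
    moreover have "(1 - \<delta>) * ?c \<le> (1 - \<delta>) * 1" using c0 assms(4) by (intro mult_left_mono) auto
    ultimately show ?thesis by simp
  next
    case False
    have xl: "x i * ?X \<ge> (p i - \<delta>) * ?X" using xi X0 by (intro mult_right_mono) auto
    show ?thesis
    proof (cases "?P \<le> 1 - ?c")
      case True
      have "p i * ?P \<le> 1 * ?P" using xi XP X0 by (intro mult_right_mono) auto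
      moreover have "(p i - \<delta>) * ?X \<ge> 0" using False X0 by simp
      moreover have "\<delta> * ?c \<ge> 0" using assms(3) c0 by simp
      ultimately show ?thesis using True xl by (simp add: algebra_simps)
    next
      case False2: False
      have "(p i - \<delta>) * ?X \<ge> (p i - \<delta>) * (?P - (1 - ?c))" using False IH by (intro mult_left_mono) auto
      moreover have "\<delta> * ?P \<le> \<delta> * 1" using assms(3) P1 by (intro mult_left_mono) auto
      moreover have "(p i - \<delta>) * (1 - ?c) \<le> (1 - \<delta>) * (1 - ?c)" using xi c0 by (intro mult_right_mono) auto
      ultimately have "p i * ?P - x i * ?X \<le> \<delta> + (1 - \<delta>) * (1 - ?c)" using xl
        by (simp add: algebra_simps)
      then show ?thesis by (simp add: algebra_simps)
    qed
  qed
  then show ?case using insert goal_eq by simp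
qed


lemma prod_indic:
  assumes "finite u"
  shows "(\<Prod>j\<in>u. (if c j then 1 else 0 :: complex)) = (if \<forall>j\<in>u. c j then 1 else 0)"
proof (cases "\<forall>j\<in>u. c j")
  case True then show ?thesis by simp
next
  case False
  then obtain j where "j \<in> u" "\<not> c j" by auto
  then show ?thesis using assms False by (simp add: prod_zero_iff)
qed

lemma disc_local:
  fixes b m s :: nat and \<gamma> :: "nat \<Rightarrow> real" and y :: "nat \<Rightarrow> int" and u :: "nat set" and x :: "nat \<Rightarrow> real"
  assumes N0: "b ^ m > 0"
    and gpos: "\<forall>j\<ge>1. 0 < \<gamma> j \<and> \<gamma> j \<le> 1"
    and Rb: "AA (b^m) (rho (\<lambda>j. 1 + \<gamma> j) \<gamma>) y s 0 - (\<Prod>j\<in>{1..s}. 1 + \<gamma> j) \<le> Q / real (b^m)"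
    and us: "u \<subseteq> {1..s}"
    and xs: "\<forall>j\<in>{1..s}. 0 < x j \<and> x j \<le> 1"
  shows "(\<Prod>j\<in>u. \<gamma> j) * \<bar>discr_u (b^m) y u x\<bar>
     \<le> (\<Sum>v\<in>Pow {1..s}. (\<Prod>j\<in>v. \<gamma> j) * (1 - (1 - 1 / real (b ^ m)) ^ card v)) + 1 / (2 * real (b ^ m)) * Q"
proof -
  let ?N = "b^m"
  let ?\<rho> = "rho (\<lambda>j. 1 + \<gamma> j) \<gamma>"
  define a where "a j = nat \<lceil>real ?N * x j\<rceil>" for j
  define \<phi> where "\<phi> j h = (if j \<in> u then complex_of_real (\<gamma> j) * chi ?N (a j) h else (if h = 0 then 1 else 0))" for j h
  let ?c = "\<lambda>k j. (int k * y j) mod int ?N < int (a j)"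
  let ?gu = "\<Prod>j\<in>u. \<gamma> j"
  have fu: "finite u" using us finite_subset by blast
  have xu: "0 < x j" "x j \<le> 1" if "j \<in> u" for j using xs us that by auto
  have gu: "0 < \<gamma> j" "\<gamma> j \<le> 1" if "j \<in> u" for j using gpos us that by auto
  have aN: "a j \<le> ?N" "real (a j) \<ge> real ?N * x j" "real (a j) \<le> real ?N * x j + 1" if "j \<in> u" for j
  proof -
    have pos: "0 < real ?N * x j" using N0 xu[OF that] by simp
    have le: "real ?N * x j \<le> real ?N" using xu[OF that] by (intro mult_left_le) auto
    have "\<lceil>real ?N * x j\<rceil> \<le> int ?N" using le by (simp add: ceiling_le_iff)
    then show "a j \<le> ?N" unfolding a_def by (simp only: nat_le_iff)
    have c0: "\<lceil>real ?N * x j\<rceil> \<ge> 0" using pos by (simp add: zero_le_ceiling)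
    then have ra: "real (a j) = real_of_int \<lceil>real ?N * x j\<rceil>" unfolding a_def by simp
    show "real (a j) \<ge> real ?N * x j" unfolding ra by (rule le_of_int_ceiling)
    show "real (a j) \<le> real ?N * x j + 1" unfolding ra by (rule of_int_ceiling_le_add_one)
  qed
  define cnt where "cnt = card {k \<in> {0..<?N}. \<forall>j\<in>u. frac (real k * real_of_int (y j) / real ?N) < x j}"
  have cnt_eq: "cnt = card {k \<in> {0..<?N}. \<forall>j\<in>u. ?c k j}"
  proof -
    have per: "frac (real k * real_of_int (y j) / real ?N) < x j \<longleftrightarrow> ?c k j" if "j \<in> u" for k j
      unfolding a_def by (rule frac_cond[OF N0 xu(1)[OF that]])
    show ?thesis unfolding cnt_def by (intro arg_cong[where f=card] Collect_cong) (use per in blast)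
  qed
  have fsum: "(\<Sum>h\<in>FF ?N. \<phi> j h * ee ?N (int k * h * y j))
      = (if j \<in> u then complex_of_real (\<gamma> j) * (if ?c k j then 1 else 0) else 1)" for j k
  proof (cases "j \<in> u")
    case True
    have "(\<Sum>h\<in>FF ?N. \<phi> j h * ee ?N (int k * h * y j))
        = complex_of_real (\<gamma> j) * (\<Sum>h\<in>FF ?N. chi ?N (a j) h * ee ?N (h * (int k * y j)))"
      unfolding sum_distrib_left \<phi>_def using True by (intro sum.cong refl) (simp add: mult_ac)
    also have "\<dots> = complex_of_real (\<gamma> j) * (if ?c k j then 1 else 0)"
      by (simp only: chi_expand[OF N0 aN(1)[OF True]])
    finally show ?thesis using True by simp
  next
    case False
    have "(\<Sum>h\<in>FF ?N. \<phi> j h * ee ?N (int k * h * y j)) = (\<Sum>h\<in>FF ?N. if h = 0 then 1 else 0)"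
      unfolding \<phi>_def using False by (intro sum.cong refl) simp
    also have "\<dots> = 1" by (simp add: FF_def)
    finally show ?thesis using False by simp
  qed
  have prodk: "(\<Prod>j\<in>{1..s}. \<Sum>h\<in>FF ?N. \<phi> j h * ee ?N (int k * h * y j))
      = complex_of_real ?gu * (if \<forall>j\<in>u. ?c k j then 1 else 0)" for k
  proof -
    have "(\<Prod>j\<in>{1..s}. \<Sum>h\<in>FF ?N. \<phi> j h * ee ?N (int k * h * y j))
        = (\<Prod>j\<in>{1..s}. if j \<in> u then complex_of_real (\<gamma> j) * (if ?c k j then 1 else 0) else 1)"
      by (simp only: fsum)
    also have "\<dots> = (\<Prod>j\<in>{1..s} \<inter> u. complex_of_real (\<gamma> j) * (if ?c k j then 1 else 0))"
      by (simp add: prod.inter_restrict[symmetric])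
    also have "{1..s} \<inter> u = u" using us by auto
    also have "(\<Prod>j\<in>u. complex_of_real (\<gamma> j) * (if ?c k j then 1 else 0))
        = (\<Prod>j\<in>u. complex_of_real (\<gamma> j)) * (\<Prod>j\<in>u. (if ?c k j then 1 else 0))"
      by (rule prod.distrib)
    also have "\<dots> = complex_of_real ?gu * (if \<forall>j\<in>u. ?c k j then 1 else 0)"
      by (simp add: prod_indic[OF fu])
    finally show ?thesis .
  qed
  have AAval: "AA ?N \<phi> y s 0 = complex_of_real (?gu * real cnt / real ?N)"
  proof -
    have "AA ?N \<phi> y s 0 = (1 / of_nat ?N) * (\<Sum>k<?N. (\<Prod>j\<in>{1..s}. \<Sum>h\<in>FF ?N. \<phi> j h * ee ?N (int k * h * y j)) * ee ?N (int k * 0))"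
      by (rule fourier[OF N0, symmetric])
    also have "\<dots> = (1 / of_nat ?N) * (complex_of_real ?gu * (\<Sum>k<?N. (if \<forall>j\<in>u. ?c k j then 1 else 0)))"
      by (simp only: prodk mult_zero_right ee_0 mult_1_right sum_distrib_left)
    also have "(\<Sum>k<?N. (if \<forall>j\<in>u. ?c k j then 1 else 0 :: complex)) = of_nat cnt"
    proof -
      have "(\<Sum>k<?N. (if \<forall>j\<in>u. ?c k j then 1 else 0 :: complex)) = of_nat (card {k \<in> {..<?N}. \<forall>j\<in>u. ?c k j})"
        by (simp add: sum.inter_filter[symmetric])
      also have "{k \<in> {..<?N}. \<forall>j\<in>u. ?c k j} = {k \<in> {0..<?N}. \<forall>j\<in>u. ?c k j}" by auto
      finally show ?thesis using cnt_eq by simp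
    qed
    finally show ?thesis by simp
  qed
  have chi0: "chi ?N n 0 = of_nat n / of_nat ?N" for n unfolding chi_def by simp
  have P0: "(\<Prod>j\<in>{1..s}. \<phi> j 0) = complex_of_real (\<Prod>j\<in>u. \<gamma> j * (real (a j) / real ?N))"
  proof -
    have "(\<Prod>j\<in>{1..s}. \<phi> j 0) = (\<Prod>j\<in>{1..s}. if j \<in> u then complex_of_real (\<gamma> j * (real (a j) / real ?N)) else 1)"
      unfolding \<phi>_def chi0 by (intro prod.cong refl) simp
    also have "\<dots> = (\<Prod>j\<in>{1..s} \<inter> u. complex_of_real (\<gamma> j * (real (a j) / real ?N)))"
      by (simp add: prod.inter_restrict[symmetric])
    also have "{1..s} \<inter> u = u" using us by auto
    finally show ?thesis by simp
  qed
  have half: "norm (AA ?N \<phi> y s 0 - (if int ?N dvd 0 then (\<Prod>j\<in>{1..s}. \<phi> j 0) else 0))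
         \<le> (AA ?N ?\<rho> y s 0 - (if int ?N dvd 0 then (\<Prod>j\<in>{1..s}. ?\<rho> j 0) else 0)) / 2"
  proof (rule AA_half)
    fix j assume j: "1 \<le> j" "j \<le> s"
    have g: "0 < \<gamma> j" "\<gamma> j \<le> 1" using gpos j by auto
    show "norm (\<phi> j 0) \<le> ?\<rho> j 0"
    proof (cases "j \<in> u")
      case True
      have "real (a j) / real ?N \<le> 1" using aN(1)[OF True] N0 by (simp add: divide_le_eq)
      then have "\<gamma> j * (real (a j) / real ?N) \<le> \<gamma> j * 1" using g by (intro mult_left_mono) auto
      moreover have e: "\<phi> j 0 = complex_of_real (\<gamma> j * (real (a j) / real ?N))"
        using True unfolding \<phi>_def chi0 by simp
      moreover have "0 \<le> \<gamma> j * (real (a j) / real ?N)" using g by simp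
      ultimately show ?thesis unfolding rho_def using g by (simp only: norm_of_real) simp
    next
      case False
      then show ?thesis using g unfolding \<phi>_def rho_def by simp
    qed
  next
    fix j h assume j: "1 \<le> j" "j \<le> s" and h: "h \<in> freqs ?N"
    have g: "0 < \<gamma> j" "\<gamma> j \<le> 1" using gpos j by auto
    have hnz: "h \<noteq> 0" using h by auto
    show "2 * norm (\<phi> j h) \<le> ?\<rho> j h"
    proof (cases "j \<in> u")
      case True
      have "norm (chi ?N (a j) h) \<le> 1 / (2 * real_of_int \<bar>h\<bar>)" by (rule chi_bound[OF N0 h])
      then have "2 * (\<gamma> j * norm (chi ?N (a j) h)) \<le> 2 * (\<gamma> j * (1 / (2 * real_of_int \<bar>h\<bar>)))"
        using g by (intro mult_left_mono) auto
      also have "\<dots> = \<gamma> j / real_of_int \<bar>h\<bar>" by simp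
      finally show ?thesis using True g hnz unfolding \<phi>_def rho_def by (simp add: norm_mult)
    next
      case False
      then show ?thesis using g hnz unfolding \<phi>_def rho_def by simp
    qed
  qed
  have rho0: "(\<Prod>j\<in>{1..s}. ?\<rho> j 0) = (\<Prod>j\<in>{1..s}. 1 + \<gamma> j)" by (simp add: rho_def)
  define pa where "pa = (\<Prod>j\<in>u. real (a j) / real ?N)"
  define px where "px = (\<Prod>j\<in>u. x j)"
  have gu_nn: "?gu \<ge> 0" using gu by (intro prod_nonneg) (auto intro: less_imp_le)
  have A1: "?gu * \<bar>real cnt / real ?N - pa\<bar> \<le> Q / (2 * real ?N)"
  proof -
    have "(\<Prod>j\<in>u. \<gamma> j * (real (a j) / real ?N)) = ?gu * pa" unfolding pa_def by (rule prod.distrib)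
    then have "norm (complex_of_real (?gu * real cnt / real ?N) - complex_of_real (?gu * pa))
        \<le> (AA ?N ?\<rho> y s 0 - (\<Prod>j\<in>{1..s}. 1 + \<gamma> j)) / 2"
      using half unfolding AAval P0 rho0 by simp
    then have "\<bar>?gu * real cnt / real ?N - ?gu * pa\<bar> \<le> (AA ?N ?\<rho> y s 0 - (\<Prod>j\<in>{1..s}. 1 + \<gamma> j)) / 2"
      by (metis norm_of_real of_real_diff)
    also have "\<dots> \<le> (Q / real ?N) / 2" using Rb by simp
    finally have "\<bar>?gu * (real cnt / real ?N - pa)\<bar> \<le> Q / (2 * real ?N)" by (simp add: algebra_simps)
    then show ?thesis using gu_nn by (simp add: abs_mult)
  qed
  have A2: "px \<le> pa" "pa - px \<le> 1 - (1 - 1 / real ?N) ^ card u"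
  proof -
    have cond: "0 \<le> x j \<and> x j \<le> real (a j) / real ?N \<and> real (a j) / real ?N \<le> 1 \<and> real (a j) / real ?N - x j \<le> 1 / real ?N"
      if "j \<in> u" for j
    proof -
      have "x j \<le> real (a j) / real ?N" using aN(2)[OF that] N0 by (simp add: le_divide_eq mult.commute)
      moreover have "real (a j) / real ?N \<le> 1" using aN(1)[OF that] N0 by (simp add: divide_le_eq)
      moreover have "real (a j) / real ?N - x j \<le> 1 / real ?N"
      proof -
        have "real (a j) \<le> real ?N * x j + 1" using aN(3)[OF that] by simp
        then have "real (a j) / real ?N \<le> (real ?N * x j + 1) / real ?N" using N0 by (simp add: divide_right_mono)
        also have "\<dots> = x j + 1 / real ?N" using N0 by (simp add: field_simps)
        finally show ?thesis by simp
      qed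
      ultimately show ?thesis using xu[OF that] by simp
    qed
    show "px \<le> pa" unfolding px_def pa_def using cond by (intro prod_mono) auto
    show "pa - px \<le> 1 - (1 - 1 / real ?N) ^ card u" unfolding px_def pa_def
      by (rule prod_diff[OF fu cond]) (use N0 in auto)
  qed
  have "?gu * \<bar>discr_u ?N y u x\<bar> = ?gu * \<bar>real cnt / real ?N - px\<bar>"
    unfolding discr_u_def cnt_def px_def by simp
  also have "\<dots> \<le> ?gu * (\<bar>real cnt / real ?N - pa\<bar> + (pa - px))"
    using A2(1) gu_nn by (intro mult_left_mono) auto
  also have "\<dots> = ?gu * \<bar>real cnt / real ?N - pa\<bar> + ?gu * (pa - px)" by (simp add: algebra_simps)
  also have "\<dots> \<le> Q / (2 * real ?N) + ?gu * (1 - (1 - 1 / real ?N) ^ card u)"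
    using A1 A2(2) gu_nn by (intro add_mono mult_left_mono) auto
  also have "?gu * (1 - (1 - 1 / real ?N) ^ card u) \<le> (\<Sum>v\<in>Pow {1..s}. (\<Prod>j\<in>v. \<gamma> j) * (1 - (1 - 1 / real (b ^ m)) ^ card v))"
  proof (rule member_le_sum[where f="\<lambda>v. (\<Prod>j\<in>v. \<gamma> j) * (1 - (1 - 1 / real (b ^ m)) ^ card v)"])
    show "u \<in> Pow {1..s}" using us by simp
    show "finite (Pow {1..s})" by simp
    fix v assume v: "v \<in> Pow {1..s} - {u}"
    have vs: "v \<subseteq> {1..s}" using v by auto
    have "\<forall>j\<in>v. 0 \<le> \<gamma> j"
    proof
      fix j assume "j \<in> v"
      then have "j \<ge> 1" using vs by auto
      then show "0 \<le> \<gamma> j" using gpos by (simp add: less_imp_le)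
    qed
    then have "(\<Prod>j\<in>v. \<gamma> j) \<ge> 0" by (intro prod_nonneg) auto
    moreover have "(1 - 1 / real ?N) ^ card v \<le> 1" using N0 by (intro power_le_one) (auto simp: field_simps)
    ultimately show "0 \<le> (\<Prod>j\<in>v. \<gamma> j) * (1 - (1 - 1 / real (b ^ m)) ^ card v)" by simp
  qed
  finally show ?thesis by (simp add: add.commute mult.commute)
qed


theorem corollary1:
  fixes b m s :: nat and \<gamma> :: "nat \<Rightarrow> real" and w z :: "nat \<Rightarrow> nat"
  assumes "prime b" and "m \<ge> 1" and "s \<ge> 1"
    and "\<forall>j\<ge>1. 0 < \<gamma> j \<and> \<gamma> j \<le> 1"
    and "\<forall>i j. 1 \<le> i \<longrightarrow> i \<le> j \<longrightarrow> \<gamma> j \<le> \<gamma> i"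
    and "\<forall>i j. 1 \<le> i \<longrightarrow> i \<le> j \<longrightarrow> w i \<le> w j"
    and "z 1 = 1"
    and "\<forall>d\<in>{1..<s}. z (d + 1) \<in> Zset b m (w (d + 1)) \<and>
           (\<forall>z'\<in>Zset b m (w (d + 1)).
              Re (R_crit (d + 1) (b ^ m) (\<lambda>j. 1 + \<gamma> j) \<gamma>
                    (\<lambda>j. int (b ^ w j * z j)))
              \<le> Re (R_crit (d + 1) (b ^ m) (\<lambda>j. 1 + \<gamma> j) \<gamma>
                    (\<lambda>j. if j = d + 1 then int (b ^ w j * z') else int (b ^ w j * z j))))"
  shows "weighted_star_discrepancy s (b ^ m) \<gamma> (\<lambda>j. int (b ^ w j * z j))
    \<le> (\<Sum>u\<in>Pow {1..s}. (\<Prod>j\<in>u. \<gamma> j) * (1 - (1 - 1 / real (b ^ m)) ^ card u))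
       + 1 / (2 * real (b ^ m)) *
         (\<Prod>j\<in>{1..s}. (1 + \<gamma> j) + (1 + 2 * real b ^ min (w j) m) * \<gamma> j * S_N (b ^ m))"
proof -
  let ?y = "\<lambda>j. int (b ^ w j * z j)"
  have b0: "b > 0" using assms(1) prime_gt_0_nat by blast
  have N0: "b ^ m > 0" using b0 by simp
  have Rb: "AA (b^m) (rho (\<lambda>j. 1 + \<gamma> j) \<gamma>) ?y s 0 - (\<Prod>j\<in>{1..s}. 1 + \<gamma> j)
      \<le> (\<Prod>j\<in>{1..s}. (1 + \<gamma> j) + (1 + 2 * real b ^ min (w j) m) * \<gamma> j * S_N (b ^ m)) / real (b^m)"
    by (rule cbc[OF assms(1) assms(4) assms(7) assms(8)]) simp
  show ?thesis unfolding weighted_star_discrepancy_def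
  proof (rule cSUP_least)
    have "((\<lambda>j. 1::real), {1}) \<in> {(x, u). (\<forall>j\<in>{1..s}. 0 < x j \<and> x j \<le> 1) \<and> u \<subseteq> {1..s} \<and> u \<noteq> {}}"
      using assms(3) by simp
    then show "{(x, u). (\<forall>j\<in>{1..s}. 0 < x j \<and> x j \<le> (1::real)) \<and> u \<subseteq> {1..s} \<and> u \<noteq> {}} \<noteq> {}" by (metis empty_iff)
  next
    fix p assume p: "p \<in> {(x, u). (\<forall>j\<in>{1..s}. 0 < x j \<and> x j \<le> (1::real)) \<and> u \<subseteq> {1..s} \<and> u \<noteq> {}}"
    obtain x u where xu: "p = (x, u)" by (cases p)
    have us: "u \<subseteq> {1..s}" and xs: "\<forall>j\<in>{1..s}. 0 < x j \<and> x j \<le> 1" using p xu by auto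
    show "(\<Prod>j\<in>snd p. \<gamma> j) * \<bar>discr_u (b ^ m) ?y (snd p) (fst p)\<bar>
      \<le> (\<Sum>u\<in>Pow {1..s}. (\<Prod>j\<in>u. \<gamma> j) * (1 - (1 - 1 / real (b ^ m)) ^ card u))
       + 1 / (2 * real (b ^ m)) *
         (\<Prod>j\<in>{1..s}. (1 + \<gamma> j) + (1 + 2 * real b ^ min (w j) m) * \<gamma> j * S_N (b ^ m))"
      unfolding xu fst_conv snd_conv by (rule disc_local[OF N0 assms(4) Rb us xs])
  qed
qed

end
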